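(* Let $K$ be an abelian group and let $\mathfrak g=\bigoplus_{i\in\mathbb Z}\mathfrak g^i$ be a differential graded Lie algebra over $\mathbb C$ with a compatible momentum grading $\mathfrak g=\bigoplus_{k\in K}\mathfrak g_k$ (see context), with homology $\mathfrak h=\bigoplus_{k\in K}\mathfrak h_k$, $\mathfrak h_k=H(\mathfrak g_k)$. Let $n\ge 2$ and let $(k_1,\dots,k_n)\in K^n$ be such that $\mathfrak h_{k_J}=0$ for every subset $J\subset\{1,\dots,n\}$ with $1<|J|<n$, where $k_J=\sum_{i\in J}k_i$. Then the restriction of the $n$-slot minimal model bracket $\{-,\dots,-\}_h$ to $$\mathfrak h_{k_1}\otimes\cdots\otimes\mathfrak h_{k_n}\to\mathfrak h_{k_1+\dots+k_n}$$ is the same for all momentum-conserving homotopies $h$ of $d$ satisfying $dhd=d$.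
   Context: A momentum grading is a decomposition $\mathfrak g=\bigoplus_{k\in K}\mathfrak g_k$ (algebraic direct sum) respecting the $\mathbb Z$-grading with $d\mathfrak g_k\subset\mathfrak g_k$ and $[\mathfrak g_{k_1},\mathfrak g_{k_2}]\subset\mathfrak g_{k_1+k_2}$. A homotopy for $d$ is an endomorphism $h$ of degree $-1$ with $h^2=0$, $hdh=h$; it is momentum conserving if $h\mathfrak g_k\subset\mathfrak g_k$ for all $k$. Given a homotopy with $dhd=d$, put $\pi=1-dh-hd$; then $\operatorname{im}\pi$ is a complement of $\operatorname{im}d$ in $\ker d$ and is canonically identified with $\mathfrak h$, giving maps $i:\mathfrak h\to\mathfrak g$, $p:\mathfrak g\to\mathfrak h$ of degree $0$ with $pi=1$, $ip=\pi$. Trees: $T_n$ is the set of trees with $n+1$ labeled leaves ($1,\dots,n$ inputs, $n+1$ output), $n-2$ unlabeled internal lines and $n-1$ internal nodes of degree 3; $P_n$ is the set of such trees with a planar embedding. For $P\in P_n$ define $m_{P,h}\in\operatorname{Hom}^{2-n}(\mathfrak h^{\otimes n},\mathfrak h)$: decorate each input leaf by $i$, the output leaf by $p$, each internal line by $h$, each node by $[\![x,y]\!]=(-1)^{|x|}[x,y]$; insert $x_j\in\mathfrak h$ at input $j$ and compose; multiply by the sign of the permutation that puts $x_1,\dots,x_n$ into the order in which the input labels of $P$ are read counterclockwise starting just left of the output, where for this permutation an even $x_j$ counts as odd and an odd one as even; finally multiply by $(-1)^{|x_{n-1}|+|x_{n-3}|+|x_{n-5}|+\cdots}$. This is independent of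 the planar embedding, giving $m_{T,h}$ for $T\in T_n$. The minimal model bracket is $\{-,\dots,-\}_h=\sum_{T\in T_n}m_{T,h}\in\operatorname{Hom}^{2-n}(\mathfrak h^{\otimes n},\mathfrak h)$. *)

theory Defs
  imports Complex_Main
begin

definition is_dirsum :: "(complex \<Rightarrow> 'v::ab_group_add \<Rightarrow> 'v) \<Rightarrow> ('i \<Rightarrow> 'v set) \<Rightarrow> bool" where
  "is_dirsum s A \<longleftrightarrow> (\<forall>i. module.subspace s (A i)) \<and>
     (\<forall>v. \<exists>!f. finite {i. f i \<noteq> 0} \<and> (\<forall>i. f i \<in> A i) \<and> v = (\<Sum>i\<in>{i. f i \<noteq> 0}. f i))"

definition dcomp :: "('i \<Rightarrow> 'v::ab_group_add set) \<Rightarrow> 'i \<Rightarrow> 'v \<Rightarrow> 'v" where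
  "dcomp A i v = (THE f. finite {i. f i \<noteq> 0} \<and> (\<forall>i. f i \<in> A i) \<and> v = (\<Sum>i\<in>{i. f i \<noteq> 0}. f i)) i"

definition sgnv :: "int \<Rightarrow> 'v::ab_group_add \<Rightarrow> 'v" where
  "sgnv d v = (if even d then v else - v)"

definition dgla :: "(complex \<Rightarrow> 'v::ab_group_add \<Rightarrow> 'v) \<Rightarrow> (int \<Rightarrow> 'v set) \<Rightarrow>
    ('v \<Rightarrow> 'v \<Rightarrow> 'v) \<Rightarrow> ('v \<Rightarrow> 'v) \<Rightarrow> bool" where
  "dgla s Gd br d \<longleftrightarrow>
     vector_space s \<and> is_dirsum s Gd \<and>
     (\<forall>x. Vector_Spaces.linear s s (br x)) \<and> (\<forall>y. Vector_Spaces.linear s s (\<lambda>x. br x y)) \<and>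
     (\<forall>a b x y. x \<in> Gd a \<longrightarrow> y \<in> Gd b \<longrightarrow> br x y \<in> Gd (a + b)) \<and>
     (\<forall>a b x y. x \<in> Gd a \<longrightarrow> y \<in> Gd b \<longrightarrow> br x y = - sgnv (a * b) (br y x)) \<and>
     (\<forall>a b c x y z. x \<in> Gd a \<longrightarrow> y \<in> Gd b \<longrightarrow> z \<in> Gd c \<longrightarrow>
        br x (br y z) = br (br x y) z + sgnv (a * b) (br y (br x z))) \<and>
     Vector_Spaces.linear s s d \<and>
     (\<forall>a x. x \<in> Gd a \<longrightarrow> d x \<in> Gd (a + 1)) \<and>
     (\<forall>x. d (d x) = 0) \<and>
     (\<forall>a x y. x \<in> Gd a \<longrightarrow> d (br x y) = br (d x) y + sgnv a (br x (d y)))"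

definition momentum_grading :: "(complex \<Rightarrow> 'v::ab_group_add \<Rightarrow> 'v) \<Rightarrow> (int \<Rightarrow> 'v set) \<Rightarrow>
    ('v \<Rightarrow> 'v \<Rightarrow> 'v) \<Rightarrow> ('v \<Rightarrow> 'v) \<Rightarrow> ('k::ab_group_add \<Rightarrow> 'v set) \<Rightarrow> bool" where
  "momentum_grading s Gd br d Gm \<longleftrightarrow>
     is_dirsum s Gm \<and>
     (\<forall>k v i. v \<in> Gm k \<longrightarrow> dcomp Gd i v \<in> Gm k) \<and>
     (\<forall>k x. x \<in> Gm k \<longrightarrow> d x \<in> Gm k) \<and>
     (\<forall>k l x y. x \<in> Gm k \<longrightarrow> y \<in> Gm l \<longrightarrow> br x y \<in> Gm (k + l))"

definition mc_homotopy :: "(complex \<Rightarrow> 'v::ab_group_add \<Rightarrow> 'v) \<Rightarrow> (int \<Rightarrow> 'v set) \<Rightarrow>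
    ('k \<Rightarrow> 'v set) \<Rightarrow> ('v \<Rightarrow> 'v) \<Rightarrow> ('v \<Rightarrow> 'v) \<Rightarrow> bool" where
  "mc_homotopy s Gd Gm d h \<longleftrightarrow>
     Vector_Spaces.linear s s h \<and>
     (\<forall>a x. x \<in> Gd a \<longrightarrow> h x \<in> Gd (a - 1)) \<and>
     (\<forall>x. h (h x) = 0) \<and> (\<forall>x. h (d (h x)) = h x) \<and>
     (\<forall>k x. x \<in> Gm k \<longrightarrow> h x \<in> Gm k)"

definition proj_pi :: "('v::ab_group_add \<Rightarrow> 'v) \<Rightarrow> ('v \<Rightarrow> 'v) \<Rightarrow> 'v \<Rightarrow> 'v" where
  "proj_pi d h x = x - d (h x) - h (d x)"

(* planar binary trees rooted at the output leaf; leaves carry input labels *)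
datatype ptree = Leaf nat | Node ptree ptree

fun leaves :: "ptree \<Rightarrow> nat list" where
  "leaves (Leaf j) = [j]"
| "leaves (Node l r) = leaves l @ leaves r"

fun is_leaf :: "ptree \<Rightarrow> bool" where
  "is_leaf (Leaf j) = True"
| "is_leaf (Node l r) = False"

definition planar_trees :: "nat \<Rightarrow> ptree set" where
  "planar_trees n = {t. distinct (leaves t) \<and> set (leaves t) = {1..n}}"

(* canonical planar embedding: at every node the subtree with the smaller
   minimal input label is on the left; these represent T_n bijectively *)
fun canonical :: "ptree \<Rightarrow> bool" where
  "canonical (Leaf j) = True"
| "canonical (Node l r) = (canonical l \<and> canonical r \<and> Min (set (leaves l)) < Min (set (leaves r)))"

definition trees :: "nat \<Rightarrow> ptree set" where
  "trees n = {t \<in> planar_trees n. canonical t}"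

(* value of the decorated tree just below its root node (before the outgoing line),
   together with its degree; x j = i(x_j), e j = degree of x_j *)
fun tval :: "('v::ab_group_add \<Rightarrow> 'v \<Rightarrow> 'v) \<Rightarrow> ('v \<Rightarrow> 'v) \<Rightarrow> (nat \<Rightarrow> 'v) \<Rightarrow> (nat \<Rightarrow> int)
    \<Rightarrow> ptree \<Rightarrow> 'v \<times> int" where
  "tval br h x e (Leaf j) = (x j, e j)"
| "tval br h x e (Node l r) =
     (case tval br h x e l of (a, da) \<Rightarrow>
      case tval br h x e r of (b, db) \<Rightarrow>
      let a' = (if is_leaf l then a else h a); da' = (if is_leaf l then da else da - 1);
          b' = (if is_leaf r then b else h b); db' = (if is_leaf r then db else db - 1)
      in (sgnv da' (br a' b'), da' + db'))"

(* Koszul sign exponent of the permutation bringing x_1..x_n into the reading order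
   of the leaves, where even elements count as odd and odd ones as even *)
definition koszul_exp :: "nat \<Rightarrow> (nat \<Rightarrow> int) \<Rightarrow> ptree \<Rightarrow> int" where
  "koszul_exp n e t = (let w = leaves t in int (card {(p, q). p < q \<and> q < length w \<and>
       w ! p > w ! q \<and> even (e (w ! p)) \<and> even (e (w ! q))}))"

definition tail_exp :: "nat \<Rightarrow> (nat \<Rightarrow> int) \<Rightarrow> int" where
  "tail_exp n e = (\<Sum>j\<in>{j. 1 \<le> j \<and> j < n \<and> odd (n - j)}. e j)"

(* the element of g whose p-image is m_{P,h}(x_1,...,x_n), inputs given by cycles z_j *)
definition m_tree :: "('v::ab_group_add \<Rightarrow> 'v \<Rightarrow> 'v) \<Rightarrow> ('v \<Rightarrow> 'v) \<Rightarrow> ('v \<Rightarrow> 'v) \<Rightarrow> nat \<Rightarrow>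
    (nat \<Rightarrow> 'v) \<Rightarrow> (nat \<Rightarrow> int) \<Rightarrow> ptree \<Rightarrow> 'v" where
  "m_tree br d h n z e t =
     sgnv (koszul_exp n e t + tail_exp n e)
       (fst (tval br h (\<lambda>j. proj_pi d h (z j)) e t))"

(* representative in g of the minimal model bracket {x_1,...,x_n}_h, x_j = [z_j];
   its class in H(g) = ker d / im d is the value p(...) *)
definition mm_bracket_rep :: "('v::ab_group_add \<Rightarrow> 'v \<Rightarrow> 'v) \<Rightarrow> ('v \<Rightarrow> 'v) \<Rightarrow> ('v \<Rightarrow> 'v) \<Rightarrow> nat \<Rightarrow>
    (nat \<Rightarrow> 'v) \<Rightarrow> (nat \<Rightarrow> int) \<Rightarrow> 'v" where
  "mm_bracket_rep br d h n z e = proj_pi d h (\<Sum>t\<in>trees n. m_tree br d h n z e t)"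

end

theory Submission
  imports Defs
begin

lemma sgnv_add: "sgnv (a+b) v = sgnv a (sgnv b v)"
  by (auto simp: sgnv_def)
lemma sgnv_neg[simp]: "sgnv a (- v) = - sgnv a v" by (auto simp: sgnv_def)
lemma sgnv_plus: "sgnv a (v + w) = sgnv a v + sgnv a w" by (auto simp: sgnv_def)
lemma sgnv_diff: "sgnv a (v - w) = sgnv a v - sgnv a w" by (auto simp: sgnv_def)
lemma sgnv_0[simp]: "sgnv a 0 = 0" by (auto simp: sgnv_def)
lemma sgnv_sum: "sgnv a (sum f S) = (\<Sum>x\<in>S. sgnv a (f x))"
  by (auto simp: sgnv_def sum_negf)
lemma sgnv_even: "even a \<Longrightarrow> sgnv a v = v" by (auto simp: sgnv_def)
lemma sgnv_odd: "odd a \<Longrightarrow> sgnv a v = - v" by (auto simp: sgnv_def)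
lemma sgnv_cong: "even (a - b) \<Longrightarrow> sgnv a v = sgnv b v"
  by (auto simp: sgnv_def)
lemma sgnv_sgnv_same: "sgnv a (sgnv a v) = v" by (auto simp: sgnv_def)

lemma mh_sgnv: "module_hom s s f \<Longrightarrow> f (sgnv a v) = sgnv a (f v)"
  by (auto simp: sgnv_def module_hom.neg)

locale DG =
  fixes s :: "complex \<Rightarrow> 'v::ab_group_add \<Rightarrow> 'v" and Gd :: "int \<Rightarrow> 'v set"
    and br :: "'v \<Rightarrow> 'v \<Rightarrow> 'v" and d :: "'v \<Rightarrow> 'v"
  assumes DG: "dgla s Gd br d"
begin

lemma vs: "vector_space s" using DG by (simp add: dgla_def)
lemma md: "module s" using vs by (simp add: vector_space_def module_def)

lemma mh_d: "module_hom s s d" using DG by (simp add: dgla_def linear_iff_module_hom)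
lemma mh_br1: "module_hom s s (br x)" using DG by (simp add: dgla_def linear_iff_module_hom)
lemma mh_br2: "module_hom s s (\<lambda>x. br x y)" using DG by (simp add: dgla_def linear_iff_module_hom)

lemma d_add: "d (a + b) = d a + d b" using mh_d module_hom.add by blast
lemma d_neg: "d (- a) = - d a" using mh_d module_hom.neg by blast
lemma d_diff: "d (a - b) = d a - d b" using mh_d module_hom.diff by blast
lemma d_0[simp]: "d 0 = 0" using mh_d module_hom.zero by blast
lemma d_sum: "d (sum f S) = (\<Sum>x\<in>S. d (f x))" using mh_d module_hom.sum by blast
lemma d_sgnv: "d (sgnv a v) = sgnv a (d v)" using mh_d mh_sgnv by blast

lemma br_add1: "br (a + b) c = br a c + br b c" using mh_br2 module_hom.add by fastforce
lemma br_add2: "br c (a + b) = br c a + br c b" using mh_br1 module_hom.add by fastforce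
lemma br_neg1: "br (- a) c = - br a c" using mh_br2 module_hom.neg by fastforce
lemma br_neg2: "br c (- a) = - br c a" using mh_br1 module_hom.neg by fastforce
lemma br_diff1: "br (a - b) c = br a c - br b c" using mh_br2 module_hom.diff by fastforce
lemma br_diff2: "br c (a - b) = br c a - br c b" using mh_br1 module_hom.diff by fastforce
lemma br_01[simp]: "br 0 c = 0" using mh_br2 module_hom.zero by fastforce
lemma br_02[simp]: "br c 0 = 0" using mh_br1 module_hom.zero by fastforce
lemma br_sum1: "br (sum f S) c = (\<Sum>x\<in>S. br (f x) c)"
  using mh_br2[of c] module_hom.sum by fastforce
lemma br_sum2: "br c (sum f S) = (\<Sum>x\<in>S. br c (f x))"
  using mh_br1[of c] module_hom.sum by fastforce
lemma br_sgnv1: "br (sgnv a u) c = sgnv a (br u c)" by (auto simp: sgnv_def br_neg1)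
lemma br_sgnv2: "br c (sgnv a u) = sgnv a (br c u)" by (auto simp: sgnv_def br_neg2)

lemma sub_Gd: "module.subspace s (Gd a)" using DG by (simp add: dgla_def is_dirsum_def)
lemma Gd_0[simp]: "0 \<in> Gd a" by (rule module.subspace_0[OF md sub_Gd])
lemma Gd_add: "x \<in> Gd a \<Longrightarrow> y \<in> Gd a \<Longrightarrow> x + y \<in> Gd a" by (rule module.subspace_add[OF md sub_Gd])
lemma Gd_neg: "x \<in> Gd a \<Longrightarrow> - x \<in> Gd a" by (rule module.subspace_neg[OF md sub_Gd])
lemma Gd_diff: "x \<in> Gd a \<Longrightarrow> y \<in> Gd a \<Longrightarrow> x - y \<in> Gd a" by (rule module.subspace_diff[OF md sub_Gd])
lemma Gd_sum: "(\<And>x. x \<in> S \<Longrightarrow> f x \<in> Gd a) \<Longrightarrow> sum f S \<in> Gd a" by (rule module.subspace_sum[OF md sub_Gd])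
lemma Gd_sgnv: "x \<in> Gd a \<Longrightarrow> sgnv b x \<in> Gd a" by (auto simp: sgnv_def Gd_neg)
lemma Gd_br': "\<forall>a b x y. x \<in> Gd a \<longrightarrow> y \<in> Gd b \<longrightarrow> br x y \<in> Gd (a + b)"
  using DG unfolding dgla_def by (elim conjE) assumption
lemma anti': "\<forall>a b x y. x \<in> Gd a \<longrightarrow> y \<in> Gd b \<longrightarrow> br x y = - sgnv (a * b) (br y x)"
  using DG unfolding dgla_def by (elim conjE) assumption
lemma jac': "\<forall>a b c x y z. x \<in> Gd a \<longrightarrow> y \<in> Gd b \<longrightarrow> z \<in> Gd c \<longrightarrow>
        br x (br y z) = br (br x y) z + sgnv (a * b) (br y (br x z))"
  using DG unfolding dgla_def by (elim conjE) assumption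
lemma Gd_d': "\<forall>a x. x \<in> Gd a \<longrightarrow> d x \<in> Gd (a + 1)"
  using DG unfolding dgla_def by (elim conjE) assumption
lemma dd'[simp]: "\<forall>x. d (d x) = 0"
  using DG unfolding dgla_def by (elim conjE) assumption
lemma leib': "\<forall>a x y. x \<in> Gd a \<longrightarrow> d (br x y) = br (d x) y + sgnv a (br x (d y))"
  using DG unfolding dgla_def by (elim conjE) assumption

lemma Gd_br: "x \<in> Gd a \<Longrightarrow> y \<in> Gd b \<Longrightarrow> br x y \<in> Gd (a + b)" by (rule Gd_br'[rule_format])
lemma Gd_d: "x \<in> Gd a \<Longrightarrow> d x \<in> Gd (a + 1)" by (rule Gd_d'[rule_format])
lemma anti: "x \<in> Gd a \<Longrightarrow> y \<in> Gd b \<Longrightarrow> br x y = - sgnv (a * b) (br y x)" by (rule anti'[rule_format])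
lemma jac: "x \<in> Gd a \<Longrightarrow> y \<in> Gd b \<Longrightarrow> z \<in> Gd c \<Longrightarrow>
        br x (br y z) = br (br x y) z + sgnv (a * b) (br y (br x z))" by (rule jac'[rule_format])
lemma dd[simp]: "d (d x) = 0" using dd' by blast
lemma leib: "x \<in> Gd a \<Longrightarrow> d (br x y) = br (d x) y + sgnv a (br x (d y))" by (rule leib'[rule_format])

lemma two_tf: fixes x :: 'v assumes "x + x = 0" shows "x = 0"
proof -
  interpret module s by (rule md)
  have e: "s (1+1) x = x + x" by (simp only: scale_left_distrib scale_one)
  have "x = s ((1/2) * (1+1)) x" by simp
  also have "\<dots> = s (1/2) (s (1+1) x)" by (simp only: scale_scale)
  also have "\<dots> = 0" by (simp only: e assms scale_zero_right)
  finally show ?thesis .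
qed

lemma three_tf: fixes x :: 'v assumes "x + x + x = 0" shows "x = 0"
proof -
  interpret module s by (rule md)
  have e: "s (1+1+1) x = x + x + x" by (simp only: scale_left_distrib scale_one)
  have "x = s ((1/3) * (1+1+1)) x" by simp
  also have "\<dots> = s (1/3) (s (1+1+1) x)" by (simp only: scale_scale)
  also have "\<dots> = 0" by (simp only: e assms scale_zero_right)
  finally show ?thesis .
qed

lemma cyc: assumes "x \<in> Gd p" "y \<in> Gd q" "w \<in> Gd r"
  shows "sgnv (p*r) (br (br x y) w) + sgnv (q*p) (br (br y w) x) + sgnv (r*q) (br (br w x) y) = 0"
proof -
  have a4: "br x w = - sgnv (p*r) (br w x)" using anti[OF assms(1,3)] .
  have j: "br x (br y w) = br (br x y) w - sgnv (p * q) (sgnv (p*r) (br y (br w x)))"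
    using jac[OF assms] a4 by (simp add: br_neg2 br_sgnv2)
  have a1: "br (br x y) w = - sgnv ((p+q)*r) (br w (br x y))" using anti[OF Gd_br[OF assms(1,2)] assms(3)] .
  have a2: "br (br y w) x = - sgnv ((q+r)*p) (br x (br y w))" using anti[OF Gd_br[OF assms(2,3)] assms(1)] .
  have a3: "br (br w x) y = - sgnv ((r+p)*q) (br y (br w x))" using anti[OF Gd_br[OF assms(3,1)] assms(2)] .
  define T1 where "T1 = br x (br y w)"
  define T2 where "T2 = br y (br w x)"
  define T3 where "T3 = br w (br x y)"
  have j': "T1 = - sgnv ((p+q)*r) T3 - sgnv (p * q) (sgnv (p*r) T2)"
    using j a1 unfolding T1_def T2_def T3_def by simp
  have g: "sgnv (p*r) (br (br x y) w) + sgnv (q*p) (br (br y w) x) + sgnv (r*q) (br (br w x) y)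
     = - sgnv (p*r) (sgnv ((p+q)*r) T3) - sgnv (q*p) (sgnv ((q+r)*p) T1) - sgnv (r*q) (sgnv ((r+p)*q) T2)"
    unfolding T1_def T2_def T3_def a1 a2 a3 by simp
  show ?thesis unfolding g j'
    by (cases "even p"; cases "even q"; cases "even r"; simp add: sgnv_def)
qed

end

definition cc :: "(nat \<Rightarrow> int) \<Rightarrow> nat set \<Rightarrow> nat set \<Rightarrow> int" where
  "cc e A B = int (card {(a,b). a \<in> A \<and> b \<in> B \<and> b < a \<and> even (e a) \<and> even (e b)})"
definition dl :: "(nat \<Rightarrow> int) \<Rightarrow> nat set \<Rightarrow> int" where
  "dl e A = (\<Sum>a\<in>A. e a) - int (card A) + 1"
definition evc :: "(nat \<Rightarrow> int) \<Rightarrow> nat set \<Rightarrow> int" where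
  "evc e A = int (card {a\<in>A. even (e a)})"

definition osp :: "nat set \<Rightarrow> (nat set \<times> nat set) set" where
  "osp K = {(A,B). A \<union> B = K \<and> A \<inter> B = {} \<and> A \<noteq> {} \<and> B \<noteq> {}}"
definition msp :: "nat set \<Rightarrow> (nat set \<times> nat set) set" where
  "msp K = {(A,B). (A,B) \<in> osp K \<and> Min A < Min B}"
definition tri :: "nat set \<Rightarrow> (nat set \<times> nat set \<times> nat set) set" where
  "tri K = {(C,D,B). C \<union> D \<union> B = K \<and> C \<inter> D = {} \<and> C \<inter> B = {} \<and> D \<inter> B = {} \<and>
              C \<noteq> {} \<and> D \<noteq> {} \<and> B \<noteq> {}}"

lemma cc_Un1:
  assumes "finite A" "finite B" "finite C" "A \<inter> B = {}"
  shows "cc e (A \<union> B) C = cc e A C + cc e B C"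
proof -
  let ?S = "\<lambda>A. {(a,b). a \<in> A \<and> b \<in> C \<and> b < a \<and> even (e a) \<and> even (e b)}"
  have eq: "?S (A \<union> B) = ?S A \<union> ?S B" by auto
  have f: "finite (?S X)" if "finite X" for X
    by (rule finite_subset[of _ "X \<times> C"]) (use that assms in auto)
  have "card (?S A \<union> ?S B) = card (?S A) + card (?S B)"
    by (rule card_Un_disjoint) (use f assms in auto)
  thus ?thesis unfolding cc_def eq by simp
qed

lemma cc_Un2:
  assumes "finite A" "finite B" "finite C" "A \<inter> B = {}"
  shows "cc e C (A \<union> B) = cc e C A + cc e C B"
proof -
  let ?S = "\<lambda>A. {(a,b). a \<in> C \<and> b \<in> A \<and> b < a \<and> even (e a) \<and> even (e b)}"
  have eq: "?S (A \<union> B) = ?S A \<union> ?S B" by auto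
  have f: "finite (?S X)" if "finite X" for X
    by (rule finite_subset[of _ "C \<times> X"]) (use that assms in auto)
  have "card (?S A \<union> ?S B) = card (?S A) + card (?S B)"
    by (rule card_Un_disjoint) (use f assms in auto)
  thus ?thesis unfolding cc_def eq by simp
qed

lemma cc_swap:
  assumes "finite A" "finite B" "A \<inter> B = {}"
  shows "cc e A B + cc e B A = evc e A * evc e B"
proof -
  let ?S1 = "{(a,b). a \<in> A \<and> b \<in> B \<and> b < a \<and> even (e a) \<and> even (e b)}"
  let ?S2 = "{(a,b). a \<in> B \<and> b \<in> A \<and> b < a \<and> even (e a) \<and> even (e b)}"
  let ?T = "{(a,b). a \<in> A \<and> b \<in> B \<and> a < b \<and> even (e a) \<and> even (e b)}"
  have sw: "prod.swap ` ?S2 = ?T" by (auto simp: image_def)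
  have c2: "card ?S2 = card ?T" unfolding sw[symmetric] by (rule card_image[symmetric]) (rule inj_swap)
  have u: "?S1 \<union> ?T = {a\<in>A. even (e a)} \<times> {b\<in>B. even (e b)}"
  proof (intro equalityI subsetI)
    fix p assume p: "p \<in> {a\<in>A. even (e a)} \<times> {b\<in>B. even (e b)}"
    obtain a b where ab: "p = (a,b)" by force
    have "a \<in> A" "b \<in> B" "even (e a)" "even (e b)" using p ab by auto
    moreover have "a \<noteq> b" using assms(3) \<open>a \<in> A\<close> \<open>b \<in> B\<close> by blast
    ultimately show "p \<in> ?S1 \<union> ?T" unfolding ab by (cases "a < b") auto
  qed auto
  have f1: "finite ?S1" by (rule finite_subset[of _ "A \<times> B"]) (use assms in auto)
  have f2: "finite ?T" by (rule finite_subset[of _ "A \<times> B"]) (use assms in auto)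
  have "card (?S1 \<union> ?T) = card ?S1 + card ?T"
    by (rule card_Un_disjoint[OF f1 f2]) auto
  hence "card ?S1 + card ?S2 = card {a\<in>A. even (e a)} * card {b\<in>B. even (e b)}"
    unfolding u c2 by (simp add: card_cartesian_product)
  hence "int (card ?S1 + card ?S2) = int (card {a\<in>A. even (e a)} * card {b\<in>B. even (e b)})"
    by (rule arg_cong)
  thus ?thesis unfolding cc_def evc_def by simp
qed

lemma dl_Un:
  assumes "finite A" "finite B" "A \<inter> B = {}"
  shows "dl e (A \<union> B) = dl e A + dl e B - 1"
  using assms by (simp add: dl_def sum.union_disjoint card_Un_disjoint)

lemma dl_evc: "finite A \<Longrightarrow> even (dl e A + 1 + evc e A)"
proof (induction A rule: finite_induct)
  case empty
  then show ?case by (simp add: dl_def evc_def)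
next
  case (insert x F)
  have d: "dl e (insert x F) = dl e F + e x - 1"
    using insert by (simp add: dl_def)
  have "{a \<in> insert x F. even (e a)} = (if even (e x) then insert x {a \<in> F. even (e a)} else {a \<in> F. even (e a)})"
    by auto
  hence "evc e (insert x F) = evc e F + (if even (e x) then 1 else 0)"
    using insert by (simp add: evc_def)
  with d insert.IH show ?case by auto
qed

lemma cc_par:
  assumes "finite A" "finite B" "A \<inter> B = {}"
  shows "even (cc e A B + cc e B A + (dl e A + 1) * (dl e B + 1))"
proof -
  have "cc e A B + cc e B A = evc e A * evc e B" by (rule cc_swap[OF assms])
  moreover have "even (dl e A + 1 + evc e A)" "even (dl e B + 1 + evc e B)"
    using dl_evc assms by auto
  ultimately show ?thesis by (simp add: even_add even_mult_iff)
qed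

lemma finite_osp: "finite K \<Longrightarrow> finite (osp K)"
  by (rule finite_subset[of _ "Pow K \<times> Pow K"]) (auto simp: osp_def)

lemma finite_msp: "finite K \<Longrightarrow> finite (msp K)"
  by (rule finite_subset[of _ "Pow K \<times> Pow K"]) (auto simp: msp_def osp_def)

lemma finite_tri: "finite K \<Longrightarrow> finite (tri K)"
  by (rule finite_subset[of _ "Pow K \<times> Pow K \<times> Pow K"]) (auto simp: tri_def)

lemma osp_D:
  assumes "(A,B) \<in> osp K" "finite K"
  shows "A \<subseteq> K" "B \<subseteq> K" "A \<noteq> K" "B \<noteq> K" "A \<noteq> {}" "B \<noteq> {}" "A \<inter> B = {}"
    "finite A" "finite B" "K = A \<union> B"
  using assms by (auto simp: osp_def dest: finite_subset)

lemma msp_osp: "p \<in> msp K \<Longrightarrow> p \<in> osp K" by (auto simp: msp_def)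

lemma osp_swap: "(A,B) \<in> osp K \<Longrightarrow> (B,A) \<in> osp K" by (auto simp: osp_def)

lemma sum_osp_msp:
  assumes "finite K"
  shows "sum f (osp K) = (\<Sum>p\<in>msp K. f p + f (prod.swap p))"
proof -
  have u: "osp K = msp K \<union> prod.swap ` msp K"
  proof (intro equalityI subsetI)
    fix p assume p: "p \<in> osp K"
    obtain A B where pAB: "p = (A,B)" by force
    have AB: "finite A" "finite B" "A \<noteq> {}" "B \<noteq> {}" "A \<inter> B = {}"
      using osp_D[OF p[unfolded pAB] assms] by auto
    have "Min A \<in> A" "Min B \<in> B" using AB by auto
    hence "Min A \<noteq> Min B" using AB(5) by (metis disjoint_iff)
    hence "Min A < Min B \<or> Min B < Min A" by auto
    thus "p \<in> msp K \<union> prod.swap ` msp K"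
      using p osp_swap[of A B K] unfolding pAB msp_def by (auto simp: image_def)
  qed (auto simp: msp_def osp_def)
  have dj: "msp K \<inter> prod.swap ` msp K = {}" by (auto simp: msp_def)
  have fm: "finite (msp K)" using finite_msp assms by blast
  have fm2: "finite (prod.swap ` msp K)" using fm by blast
  have s1: "sum f (msp K \<union> prod.swap ` msp K) = sum f (msp K) + sum f (prod.swap ` msp K)"
    by (rule sum.union_disjoint[OF fm fm2 dj])
  have s2: "sum f (prod.swap ` msp K) = sum (f \<circ> prod.swap) (msp K)"
    by (rule sum.reindex) (rule inj_swap)
  have s3: "(\<Sum>p\<in>msp K. f p + f (prod.swap p)) = sum f (msp K) + sum (f \<circ> prod.swap) (msp K)"
    by (simp add: sum.distrib)
  show ?thesis unfolding u s1 s2 s3 ..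
qed

lemma osp_single: "osp {a} = {}"
proof -
  have False if "(A,B) \<in> osp {a}" for A B
  proof -
    have "A \<subseteq> {a}" "B \<subseteq> {a}" "A \<noteq> {}" "B \<noteq> {}" "A \<inter> B = {}" using that by (auto simp: osp_def)
    hence "A = {a}" "B = {a}" by (auto simp: subset_singleton_iff)
    thus False using \<open>A \<inter> B = {}\<close> by simp
  qed
  thus ?thesis by auto
qed
lemma msp_single: "msp {a} = {}" using osp_single by (auto simp: msp_def)


definition pb :: "('v::ab_group_add \<Rightarrow> 'v \<Rightarrow> 'v) \<Rightarrow> (nat \<Rightarrow> int) \<Rightarrow> nat set \<Rightarrow> nat set \<Rightarrow> 'v \<Rightarrow> 'v \<Rightarrow> 'v" where
  "pb br e A B u w = sgnv (cc e A B + dl e A) (br u w)"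

definition YY :: "('v::ab_group_add \<Rightarrow> 'v \<Rightarrow> 'v) \<Rightarrow> (nat \<Rightarrow> int) \<Rightarrow> (nat set \<Rightarrow> 'v) \<Rightarrow> nat set \<Rightarrow> 'v" where
  "YY br e H K = (\<Sum>p\<in>msp K. pb br e (fst p) (snd p) (H (fst p)) (H (snd p)))"

definition rot :: "'a \<times> 'a \<times> 'a \<Rightarrow> 'a \<times> 'a \<times> 'a" where
  "rot t = (fst (snd t), snd (snd t), fst t)"

lemma sgn3:
  assumes "even (a + x - b - y)" "even (a + x - c - z)" "sgnv x X + sgnv y Y + sgnv z Z = 0"
  shows "sgnv a X + sgnv b Y + sgnv c Z = (0::'a::ab_group_add)"
proof -
  have "sgnv z Z = - sgnv x X - sgnv y Y" using assms(3) by (simp add: eq_neg_iff_add_eq_0 algebra_simps)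
  hence h: "Z = sgnv z (- sgnv x X - sgnv y Y)" by (metis sgnv_sgnv_same)
  show ?thesis unfolding h using assms(1,2)
    by (cases "even a"; cases "even x"; cases "even b"; cases "even y"; cases "even c"; cases "even z";
      simp add: sgnv_def even_add even_diff algebra_simps)
qed

context DG begin

lemma pb_sym:
  assumes "finite A" "finite B" "A \<inter> B = {}" "u \<in> Gd (dl e A)" "w \<in> Gd (dl e B)"
  shows "pb br e A B u w = pb br e B A w u"
proof -
  have a: "br w u = - sgnv (dl e B * dl e A) (br u w)" by (rule anti[OF assms(5,4)])
  have p: "even (cc e A B + cc e B A + (dl e A + 1) * (dl e B + 1))" by (rule cc_par[OF assms(1-3)])
  show ?thesis unfolding pb_def a using p
    by (cases "even (dl e A)"; cases "even (dl e B)"; cases "even (cc e A B)"; cases "even (cc e B A)";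
        simp add: sgnv_def even_add even_mult_iff)
qed

lemma pb_Gd:
  assumes "finite A" "finite B" "A \<inter> B = {}" "u \<in> Gd (dl e A)" "w \<in> Gd (dl e B)"
  shows "pb br e A B u w \<in> Gd (dl e (A \<union> B) + 1)"
proof -
  have "br u w \<in> Gd (dl e A + dl e B)" by (rule Gd_br[OF assms(4,5)])
  moreover have "dl e A + dl e B = dl e (A \<union> B) + 1" using dl_Un[OF assms(1-3)] by simp
  ultimately show ?thesis unfolding pb_def by (metis Gd_sgnv)
qed

definition hom :: "(nat \<Rightarrow> int) \<Rightarrow> (nat set \<Rightarrow> 'v) \<Rightarrow> nat set \<Rightarrow> bool" where
  "hom e H K \<longleftrightarrow> (\<forall>A. A \<subseteq> K \<and> A \<noteq> {} \<and> A \<noteq> K \<longrightarrow> H A \<in> Gd (dl e A))"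

lemma hom_osp:
  assumes "hom e H K" "p \<in> osp K" "finite K"
  shows "H (fst p) \<in> Gd (dl e (fst p))" "H (snd p) \<in> Gd (dl e (snd p))"
  using assms osp_D[of "fst p" "snd p" K] unfolding hom_def by auto

lemma hom_sub:
  assumes "hom e H K" "A \<subseteq> K"
  shows "hom e H A"
  using assms unfolding hom_def by auto

lemma Y_Gd:
  assumes "finite K" "hom e H K"
  shows "YY br e H K \<in> Gd (dl e K + 1)"
  unfolding YY_def
proof (rule Gd_sum)
  fix p assume "p \<in> msp K"
  hence p: "p \<in> osp K" by (rule msp_osp)
  note D = osp_D[of "fst p" "snd p" K, simplified, OF p assms(1)]
  show "pb br e (fst p) (snd p) (H (fst p)) (H (snd p)) \<in> Gd (dl e K + 1)"
    using pb_Gd[OF D(8,9,7) hom_osp[OF assms(2) p assms(1)]] D(10) by simp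
qed

lemma Y_double:
  assumes "finite K" "hom e H K"
  shows "YY br e H K + YY br e H K = (\<Sum>p\<in>osp K. pb br e (fst p) (snd p) (H (fst p)) (H (snd p)))"
proof -
  have "(\<Sum>p\<in>osp K. pb br e (fst p) (snd p) (H (fst p)) (H (snd p))) =
     (\<Sum>p\<in>msp K. pb br e (fst p) (snd p) (H (fst p)) (H (snd p)) + pb br e (fst (prod.swap p)) (snd (prod.swap p)) (H (fst (prod.swap p))) (H (snd (prod.swap p))))"
    by (rule sum_osp_msp[OF assms(1)])
  also have "\<dots> = (\<Sum>p\<in>msp K. pb br e (fst p) (snd p) (H (fst p)) (H (snd p)) + pb br e (fst p) (snd p) (H (fst p)) (H (snd p)))"
  proof (rule sum.cong)
    fix p assume "p \<in> msp K"
    hence p: "p \<in> osp K" by (rule msp_osp)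
    note D = osp_D[of "fst p" "snd p" K, simplified, OF p assms(1)]
    show "pb br e (fst p) (snd p) (H (fst p)) (H (snd p)) + pb br e (fst (prod.swap p)) (snd (prod.swap p)) (H (fst (prod.swap p))) (H (snd (prod.swap p))) =
      pb br e (fst p) (snd p) (H (fst p)) (H (snd p)) + pb br e (fst p) (snd p) (H (fst p)) (H (snd p))"
      using pb_sym[OF D(8,9,7) hom_osp[OF assms(2) p assms(1)]] by simp
  qed simp
  finally show ?thesis unfolding YY_def by (simp add: sum.distrib)
qed

lemma Y_local:
  assumes "\<And>A. A \<subseteq> K \<Longrightarrow> A \<noteq> K \<Longrightarrow> H A = H' A"
  shows "YY br e H K = YY br e H' K"
  unfolding YY_def
proof (rule sum.cong)
  fix p assume "p \<in> msp K"
  hence "fst p \<subseteq> K" "snd p \<subseteq> K" "fst p \<noteq> K" "snd p \<noteq> K"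
    by (auto simp: msp_def osp_def) blast+
  thus "pb br e (fst p) (snd p) (H (fst p)) (H (snd p)) = pb br e (fst p) (snd p) (H' (fst p)) (H' (snd p))"
    using assms by simp
qed simp

lemma Y_single: "YY br e H {a} = 0"
  unfolding YY_def msp_single by simp

lemma pb_leib:
  assumes "finite A" "finite B" "A \<inter> B = {}" "u \<in> Gd (dl e A)" "w \<in> Gd (dl e B)"
  shows "d (pb br e A B u w) = sgnv (cc e A B + dl e A) (br (d u) w) + sgnv (cc e B A + dl e B) (br (d w) u)"
proof -
  have a: "br u (d w) = - sgnv (dl e A * (dl e B + 1)) (br (d w) u)" by (rule anti[OF assms(4) Gd_d[OF assms(5)]])
  have l: "d (br u w) = br (d u) w + sgnv (dl e A) (br u (d w))" by (rule leib[OF assms(4)])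
  have p: "even (cc e A B + cc e B A + (dl e A + 1) * (dl e B + 1))" by (rule cc_par[OF assms(1-3)])
  show ?thesis unfolding pb_def d_sgnv l a using p
    by (cases "even (dl e A)"; cases "even (dl e B)"; cases "even (cc e A B)"; cases "even (cc e B A)";
        simp add: sgnv_def even_add even_mult_iff)
qed

lemma cyc_R:
  assumes "finite C" "finite D" "finite B" "C \<inter> D = {}" "C \<inter> B = {}" "D \<inter> B = {}"
    "H C \<in> Gd (dl e C)" "H D \<in> Gd (dl e D)" "H B \<in> Gd (dl e B)"
  shows "sgnv (cc e (C \<union> D) B + dl e (C \<union> D)) (br (pb br e C D (H C) (H D)) (H B))
       + sgnv (cc e (D \<union> B) C + dl e (D \<union> B)) (br (pb br e D B (H D) (H B)) (H C))
       + sgnv (cc e (B \<union> C) D + dl e (B \<union> C)) (br (pb br e B C (H B) (H C)) (H D)) = 0"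
proof -
  have r: "sgnv (cc e (X \<union> Y) Z + dl e (X \<union> Y)) (br (pb br e X Y (H X) (H Y)) (H Z))
     = sgnv (cc e (X \<union> Y) Z + dl e (X \<union> Y) + (cc e X Y + dl e X)) (br (br (H X) (H Y)) (H Z))" for X Y Z
    unfolding pb_def by (simp add: br_sgnv1 sgnv_add)
  have c: "sgnv (dl e C * dl e B) (br (br (H C) (H D)) (H B)) + sgnv (dl e D * dl e C) (br (br (H D) (H B)) (H C))
     + sgnv (dl e B * dl e D) (br (br (H B) (H C)) (H D)) = 0"
    by (rule cyc[OF assms(7-9)])
  have e1: "cc e (C \<union> D) B = cc e C B + cc e D B" by (rule cc_Un1) (use assms in auto)
  have e2: "cc e (D \<union> B) C = cc e D C + cc e B C" by (rule cc_Un1) (use assms in auto)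
  have e3: "cc e (B \<union> C) D = cc e B D + cc e C D" by (rule cc_Un1) (use assms in auto)
  have f1: "dl e (C \<union> D) = dl e C + dl e D - 1" by (rule dl_Un) (use assms in auto)
  have f2: "dl e (D \<union> B) = dl e D + dl e B - 1" by (rule dl_Un) (use assms in auto)
  have f3: "dl e (B \<union> C) = dl e B + dl e C - 1" by (rule dl_Un) (use assms in auto)
  have p1: "even (cc e C D + cc e D C + (dl e C + 1) * (dl e D + 1))" by (rule cc_par) (use assms in auto)
  have p2: "even (cc e C B + cc e B C + (dl e C + 1) * (dl e B + 1))" by (rule cc_par) (use assms in auto)
  have p3: "even (cc e D B + cc e B D + (dl e D + 1) * (dl e B + 1))" by (rule cc_par) (use assms in auto)
  show ?thesis unfolding r
  proof (rule sgn3[OF _ _ c])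
    show "even (cc e (C \<union> D) B + dl e (C \<union> D) + (cc e C D + dl e C) + dl e C * dl e B -
     (cc e (D \<union> B) C + dl e (D \<union> B) + (cc e D B + dl e D)) - dl e D * dl e C)"
      unfolding e1 e2 e3 f1 f2 f3 using p1 p2 p3
      apply (simp add: even_add even_mult_iff even_diff)
      by argo
    show "even (cc e (C \<union> D) B + dl e (C \<union> D) + (cc e C D + dl e C) + dl e C * dl e B -
     (cc e (B \<union> C) D + dl e (B \<union> C) + (cc e B C + dl e B)) - dl e B * dl e D)"
      unfolding e1 e2 e3 f1 f2 f3 using p1 p2 p3
      apply (simp add: even_add even_mult_iff even_diff)
      by argo
  qed
qed

lemma rot3: "rot (rot (rot t)) = t" by (simp add: rot_def)

lemma tri_rot: "t \<in> tri K \<Longrightarrow> rot t \<in> tri K"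
  by (auto simp: tri_def rot_def)

lemma sum_tri_rot: "sum g (tri K) = sum (g \<circ> rot) (tri K)"
  by (rule sum.reindex_bij_witness[where i = rot and j = "\<lambda>t. rot (rot t)"])
     (auto simp: rot3 tri_rot)

lemma sum_osp_tri:
  assumes "finite K"
  shows "(\<Sum>p\<in>osp K. \<Sum>q\<in>osp (fst p). g (fst q) (snd q) (snd p)) = (\<Sum>t\<in>tri K. g (fst t) (fst (snd t)) (snd (snd t)))"
proof -
  have fo: "finite (osp K)" using finite_osp[OF assms] .
  have fi: "\<forall>p\<in>osp K. finite (osp (fst p))" using assms
    by (auto intro!: finite_osp dest: osp_D)
  have "(\<Sum>p\<in>osp K. \<Sum>q\<in>osp (fst p). g (fst q) (snd q) (snd p)) =
      (\<Sum>(p,q)\<in>Sigma (osp K) (\<lambda>p. osp (fst p)). g (fst q) (snd q) (snd p))"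
    by (rule sum.Sigma[OF fo fi])
  also have "\<dots> = (\<Sum>t\<in>tri K. g (fst t) (fst (snd t)) (snd (snd t)))"
    by (rule sum.reindex_bij_witness[where i = "\<lambda>t. ((fst t \<union> fst (snd t), snd (snd t)), (fst t, fst (snd t)))"
         and j = "\<lambda>(p,q). (fst q, snd q, snd p)"])
       (auto simp: osp_def tri_def)
  finally show ?thesis .
qed

lemma JL:
  assumes "finite K" "hom e H K" "\<And>A. A \<subseteq> K \<Longrightarrow> A \<noteq> {} \<Longrightarrow> A \<noteq> K \<Longrightarrow> d (H A) = YY br e H A"
  shows "d (YY br e H K) = 0"
proof -
  define Q where "Q p = sgnv (cc e (fst p) (snd p) + dl e (fst p)) (br (YY br e H (fst p)) (H (snd p)))" for p
  define R where "R C D B = sgnv (cc e (C \<union> D) B + dl e (C \<union> D)) (br (pb br e C D (H C) (H D)) (H B))" for C D B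
  have s1: "d (YY br e H K) = (\<Sum>p\<in>msp K. Q p + Q (prod.swap p))"
    unfolding YY_def d_sum
  proof (rule sum.cong)
    fix p assume "p \<in> msp K"
    hence p: "p \<in> osp K" by (rule msp_osp)
    note D = osp_D[of "fst p" "snd p" K, simplified, OF p assms(1)]
    show "d (pb br e (fst p) (snd p) (H (fst p)) (H (snd p))) = Q p + Q (prod.swap p)"
      unfolding pb_leib[OF D(8,9,7) hom_osp[OF assms(2) p assms(1)]] Q_def
      using assms(3)[of "fst p"] assms(3)[of "snd p"] D by simp
  qed simp
  also have "\<dots> = sum Q (osp K)" by (rule sum_osp_msp[OF assms(1), symmetric])
  finally have s1: "d (YY br e H K) = sum Q (osp K)" .
  have s2: "Q p + Q p = (\<Sum>q\<in>osp (fst p). R (fst q) (snd q) (snd p))" if p: "p \<in> osp K" for p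
  proof -
    note D = osp_D[of "fst p" "snd p" K, simplified, OF p assms(1)]
    have hA: "hom e H (fst p)" by (rule hom_sub[OF assms(2) D(1)])
    have "Q p + Q p = sgnv (cc e (fst p) (snd p) + dl e (fst p)) (br (YY br e H (fst p) + YY br e H (fst p)) (H (snd p)))"
      unfolding Q_def br_add1 sgnv_plus ..
    also have "\<dots> = (\<Sum>q\<in>osp (fst p). sgnv (cc e (fst p) (snd p) + dl e (fst p)) (br (pb br e (fst q) (snd q) (H (fst q)) (H (snd q))) (H (snd p))))"
      unfolding Y_double[OF D(8) hA] br_sum1 sgnv_sum ..
    also have "\<dots> = (\<Sum>q\<in>osp (fst p). R (fst q) (snd q) (snd p))"
    proof (rule sum.cong)
      fix q assume "q \<in> osp (fst p)"
      hence "fst q \<union> snd q = fst p" by (auto simp: osp_def)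
      thus "sgnv (cc e (fst p) (snd p) + dl e (fst p)) (br (pb br e (fst q) (snd q) (H (fst q)) (H (snd q))) (H (snd p))) = R (fst q) (snd q) (snd p)"
        unfolding R_def by simp
    qed simp
    finally show ?thesis .
  qed
  have s3: "(\<Sum>t\<in>tri K. R (fst t) (fst (snd t)) (snd (snd t))) = 0"
  proof -
    let ?g = "\<lambda>t. R (fst t) (fst (snd t)) (snd (snd t))"
    have "sum ?g (tri K) + sum ?g (tri K) + sum ?g (tri K) = sum ?g (tri K) + sum (?g \<circ> rot) (tri K) + sum (?g \<circ> rot \<circ> rot) (tri K)"
      using sum_tri_rot[of ?g K] sum_tri_rot[of "?g \<circ> rot" K] by simp
    also have "\<dots> = (\<Sum>t\<in>tri K. ?g t + ?g (rot t) + ?g (rot (rot t)))"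
      by (simp add: sum.distrib)
    also have "\<dots> = 0"
    proof (rule sum.neutral, rule ballI)
      fix t assume t: "t \<in> tri K"
      obtain C D B where tCDB: "t = (C, D, B)" by (cases t) auto
      have T: "C \<union> D \<union> B = K" "C \<inter> D = {}" "C \<inter> B = {}" "D \<inter> B = {}" "C \<noteq> {}" "D \<noteq> {}" "B \<noteq> {}"
        using t unfolding tCDB tri_def by auto
      have fin: "finite C" "finite D" "finite B" using T(1) assms(1) by (auto dest: finite_subset)
      have hC: "H C \<in> Gd (dl e C)" using assms(2) T unfolding hom_def by auto
      have hD: "H D \<in> Gd (dl e D)" using assms(2) T unfolding hom_def by auto
      have hB: "H B \<in> Gd (dl e B)" using assms(2) T unfolding hom_def by auto
      show "?g t + ?g (rot t) + ?g (rot (rot t)) = 0"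
        unfolding tCDB rot_def R_def using cyc_R[OF fin T(2-4) hC hD hB] by simp
    qed
    finally show ?thesis by (rule three_tf)
  qed
  have "d (YY br e H K) + d (YY br e H K) = (\<Sum>p\<in>osp K. Q p + Q p)"
    unfolding s1 sum.distrib ..
  also have "\<dots> = (\<Sum>p\<in>osp K. \<Sum>q\<in>osp (fst p). R (fst q) (snd q) (snd p))"
    by (rule sum.cong) (simp_all add: s2)
  also have "\<dots> = 0" unfolding sum_osp_tri[OF assms(1)] by (rule s3)
  finally show ?thesis by (rule two_tf)
qed

end

definition gG :: "('v::ab_group_add \<Rightarrow> 'v \<Rightarrow> 'v) \<Rightarrow> (nat \<Rightarrow> int) \<Rightarrow> nat set \<Rightarrow> 'v \<Rightarrow> (nat set \<Rightarrow> 'v) \<Rightarrow> nat set \<Rightarrow> 'v" where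
  "gG br e J v H A = sgnv (cc e J (A - J) + dl e J) (br v (H (A - J)))"

definition gmove :: "('v::ab_group_add \<Rightarrow> 'v \<Rightarrow> 'v) \<Rightarrow> ('v \<Rightarrow> 'v) \<Rightarrow> (nat \<Rightarrow> int) \<Rightarrow> nat set \<Rightarrow> 'v \<Rightarrow> (nat set \<Rightarrow> 'v) \<Rightarrow> nat set \<Rightarrow> 'v" where
  "gmove br d e J v H A = (if A = J then H A + d v else if J \<subseteq> A \<and> A \<noteq> J then H A + gG br e J v H A else H A)"

context DG begin

lemma pb_add1: "pb br e A B (x + y) w = pb br e A B x w + pb br e A B y w"
  unfolding pb_def br_add1 sgnv_plus ..
lemma pb_01[simp]: "pb br e A B 0 w = 0"
  unfolding pb_def by simp
lemma pb_02[simp]: "pb br e A B w 0 = 0"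
  unfolding pb_def by simp

lemma gG_Gd:
  assumes "finite A" "J \<subseteq> A" "v \<in> Gd (dl e J - 1)" "H (A - J) \<in> Gd (dl e (A - J))"
  shows "gG br e J v H A \<in> Gd (dl e A)"
proof -
  have fJ: "finite J" using assms(1,2) finite_subset by blast
  have u: "J \<union> (A - J) = A" using assms(2) by blast
  have "dl e (J \<union> (A - J)) = dl e J + dl e (A - J) - 1" by (rule dl_Un) (use assms fJ in auto)
  hence eq: "dl e J - 1 + dl e (A - J) = dl e A" unfolding u by simp
  show ?thesis unfolding gG_def using Gd_sgnv[OF Gd_br[OF assms(3,4)]] eq by simp
qed

lemma pb_add2: "pb br e A B w (x + y) = pb br e A B w x + pb br e A B w y"
  unfolding pb_def br_add2 sgnv_plus ..

lemma GL:
  assumes fK: "finite K" and JK: "J \<subseteq> K" "J \<noteq> K" "J \<noteq> {}" and hH: "hom e H K"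
    and v: "v \<in> Gd (dl e J - 1)"
    and dH: "\<And>C. C \<subseteq> K - J \<Longrightarrow> C \<noteq> {} \<Longrightarrow> d (H C) = YY br e H C"
  shows "YY br e (gmove br d e J v H) K - YY br e H K = d (gG br e J v H K)"
proof -
  define H' where "H' = gmove br d e J v H"
  define Dl where "Dl A = (if A = J then d v else if J \<subseteq> A \<and> A \<noteq> J then gG br e J v H A else 0)" for A
  have H'eq: "H' A = H A + Dl A" for A unfolding H'_def Dl_def gmove_def by simp
  define L where "L = K - J"
  have fJ: "finite J" using fK JK finite_subset by blast
  have L: "L \<noteq> {}" "L \<subseteq> K" "L \<noteq> K" "finite L" "J \<inter> L = {}" "J \<union> L = K"
    using JK fK unfolding L_def by auto
  have HL: "H L \<in> Gd (dl e L)" using hH L unfolding hom_def by auto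
  have DlGd: "Dl A \<in> Gd (dl e A)" if "A \<subseteq> K" "A \<noteq> {}" "A \<noteq> K" for A
  proof (cases "A = J")
    case True
    then show ?thesis unfolding Dl_def using Gd_d[OF v] by simp
  next
    case False
    note AJ = False
    show ?thesis
    proof (cases "J \<subseteq> A")
      case True
      have "A - J \<noteq> {}" using AJ True by blast
      moreover have "A - J \<subseteq> K" "A - J \<noteq> K" using that JK by auto
      ultimately have "H (A - J) \<in> Gd (dl e (A - J))" using hH unfolding hom_def by blast
      hence "gG br e J v H A \<in> Gd (dl e A)"
        by (rule gG_Gd[OF finite_subset[OF that(1) fK] True v])
      then show ?thesis unfolding Dl_def using True AJ by simp
    next
      case False
      then show ?thesis unfolding Dl_def using \<open>A \<noteq> J\<close> by simp
    qed
  qed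
  define g where "g p = pb br e (fst p) (snd p) (Dl (fst p)) (H (snd p))" for p
  have st1: "YY br e H' K - YY br e H K = sum g (osp K)"
  proof -
    have "YY br e H' K - YY br e H K = (\<Sum>p\<in>msp K. pb br e (fst p) (snd p) (H' (fst p)) (H' (snd p)) - pb br e (fst p) (snd p) (H (fst p)) (H (snd p)))"
      unfolding YY_def sum_subtractf ..
    also have "\<dots> = (\<Sum>p\<in>msp K. g p + g (prod.swap p))"
    proof (rule sum.cong)
      fix p assume "p \<in> msp K"
      hence p: "p \<in> osp K" by (rule msp_osp)
      note D = osp_D[of "fst p" "snd p" K, simplified, OF p fK]
      have z: "Dl (fst p) = 0 \<or> Dl (snd p) = 0"
        using D(7) JK(3) unfolding Dl_def by auto
      have sy: "pb br e (fst p) (snd p) (H (fst p)) (Dl (snd p)) = pb br e (snd p) (fst p) (Dl (snd p)) (H (fst p))"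
        by (rule pb_sym[OF D(8,9,7) hom_osp(1)[OF hH p fK] DlGd[OF D(2,6,4)]])
      show "pb br e (fst p) (snd p) (H' (fst p)) (H' (snd p)) - pb br e (fst p) (snd p) (H (fst p)) (H (snd p)) = g p + g (prod.swap p)"
        unfolding H'eq pb_add1 pb_add2 g_def using z sy by auto
    qed simp
    also have "\<dots> = sum g (osp K)" by (rule sum_osp_msp[OF fK, symmetric])
    finally show ?thesis unfolding H'_def .
  qed
  define S where "S = insert (J, L) ((\<lambda>q. (J \<union> fst q, snd q)) ` osp L)"
  have SK: "S \<subseteq> osp K" unfolding S_def using L JK by (auto simp: osp_def)
  have out0: "g p = 0" if "p \<in> osp K - S" for p
  proof -
    have p: "p \<in> osp K" using that by blast
    note D = osp_D[of "fst p" "snd p" K, simplified, OF p fK]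
    have "Dl (fst p) = 0"
    proof (cases "fst p = J")
      case True
      hence "snd p = L" using D unfolding L_def by auto
      hence "p \<in> S" using True unfolding S_def by (metis insertI1 prod.collapse)
      thus ?thesis using that by blast
    next
      case False
      show ?thesis
      proof (cases "J \<subseteq> fst p")
        case True
        have q: "(fst p - J, snd p) \<in> osp L" using D True False unfolding osp_def L_def by auto
        have "J \<union> fst p = fst p" using True by blast
        hence "p = (J \<union> fst (fst p - J, snd p), snd (fst p - J, snd p))" by simp
        hence "p \<in> S" using q unfolding S_def by blast
        thus ?thesis using that by blast
      qed (simp add: Dl_def False)
    qed
    thus ?thesis unfolding g_def by simp
  qed
  have fS: "finite (osp K)" by (rule finite_osp[OF fK])
  have "sum g (osp K) = sum g S"
    by (rule sum.mono_neutral_right[OF fS SK]) (use out0 in blast)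
  also have "\<dots> = g (J, L) + sum g ((\<lambda>q. (J \<union> fst q, snd q)) ` osp L)"
    unfolding S_def
  proof (rule sum.insert)
    show "finite ((\<lambda>q. (J \<union> fst q, snd q)) ` osp L)" using finite_osp[OF L(4)] by blast
    show "(J, L) \<notin> (\<lambda>q. (J \<union> fst q, snd q)) ` osp L"
      using L(5) by (auto simp: osp_def) blast
  qed
  also have "sum g ((\<lambda>q. (J \<union> fst q, snd q)) ` osp L) = sum (g \<circ> (\<lambda>q. (J \<union> fst q, snd q))) (osp L)"
  proof (rule sum.reindex, rule inj_onI)
    fix x y assume "x \<in> osp L" "y \<in> osp L" "(J \<union> fst x, snd x) = (J \<union> fst y, snd y)"
    moreover have "fst x \<inter> J = {}" "fst y \<inter> J = {}" using calculation(1,2) L(5) by (auto simp: osp_def)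
    ultimately have e: "J \<union> fst x = J \<union> fst y" "snd x = snd y" "fst x \<inter> J = {}" "fst y \<inter> J = {}" by auto
    have "fst x = (J \<union> fst x) - J" using e(3) by blast
    also have "\<dots> = (J \<union> fst y) - J" using e(1) by simp
    also have "\<dots> = fst y" using e(4) by blast
    finally show "x = y" using e(2) by (simp add: prod_eq_iff)
  qed
  finally have st2: "sum g (osp K) = g (J, L) + sum (g \<circ> (\<lambda>q. (J \<union> fst q, snd q))) (osp L)" .
  define T1 where "T1 C B = sgnv (cc e J L + dl e J + (dl e J - 1) + cc e C B + dl e C) (br (br v (H C)) (H B))" for C B
  have HCB: "H C \<in> Gd (dl e C)" if "C \<subseteq> L" "C \<noteq> {}" for C
    using hH that L unfolding hom_def by auto
  have st3: "(g \<circ> (\<lambda>q. (J \<union> fst q, snd q))) q = T1 (fst q) (snd q)" if q: "q \<in> osp L" for q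
  proof -
    note D = osp_D[of "fst q" "snd q" L, simplified, OF q L(4)]
    have dj: "J \<inter> fst q = {}" "J \<inter> snd q = {}" using D L(5) by auto
    have m: "(J \<union> fst q) - J = fst q" using dj by auto
    have ne: "J \<union> fst q \<noteq> J" using dj D(5) by auto
    have Dl: "Dl (J \<union> fst q) = sgnv (cc e J (fst q) + dl e J) (br v (H (fst q)))"
      unfolding Dl_def gG_def m using ne by simp
    have e1: "cc e (J \<union> fst q) (snd q) = cc e J (snd q) + cc e (fst q) (snd q)"
      by (rule cc_Un1) (use fJ D dj in auto)
    have e2: "dl e (J \<union> fst q) = dl e J + dl e (fst q) - 1" by (rule dl_Un) (use fJ D dj in auto)
    have e3: "cc e J L = cc e J (fst q) + cc e J (snd q)"
      unfolding D(10) by (rule cc_Un2) (use fJ D in auto)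
    show ?thesis unfolding comp_def g_def fst_conv snd_conv Dl pb_def br_sgnv1 T1_def
      by (simp add: sgnv_add[symmetric] e1 e2 e3 algebra_simps)
  qed
  define RHS where "RHS = sgnv (cc e J L + dl e J) (sgnv (dl e J - 1) (br v (YY br e H L)))"
  have hL: "hom e H L" by (rule hom_sub[OF hH L(2)])
  have st4: "RHS + RHS = (\<Sum>q\<in>osp L. T1 (fst q) (snd q) + T1 (snd q) (fst q))"
  proof -
    have "RHS + RHS = (\<Sum>q\<in>osp L. sgnv (cc e J L + dl e J) (sgnv (dl e J - 1) (br v (pb br e (fst q) (snd q) (H (fst q)) (H (snd q))))))"
      unfolding RHS_def sgnv_plus[symmetric] br_add2[symmetric] Y_double[OF L(4) hL] br_sum2 sgnv_sum ..
    also have "\<dots> = (\<Sum>q\<in>osp L. T1 (fst q) (snd q) + T1 (snd q) (fst q))"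
    proof (rule sum.cong)
      fix q assume q: "q \<in> osp L"
      note D = osp_D[of "fst q" "snd q" L, simplified, OF q L(4)]
      have x: "H (fst q) \<in> Gd (dl e (fst q))" by (rule HCB) (use D in auto)
      have y: "H (snd q) \<in> Gd (dl e (snd q))" by (rule HCB) (use D in auto)
      have j: "br v (br (H (fst q)) (H (snd q))) = br (br v (H (fst q))) (H (snd q)) + sgnv ((dl e J - 1) * dl e (fst q)) (br (H (fst q)) (br v (H (snd q))))"
        by (rule jac[OF v x y])
      have a: "br (H (fst q)) (br v (H (snd q))) = - sgnv (dl e (fst q) * (dl e J - 1 + dl e (snd q))) (br (br v (H (snd q))) (H (fst q)))"
        by (rule anti[OF x Gd_br[OF v y]])
      have p: "even (cc e (fst q) (snd q) + cc e (snd q) (fst q) + (dl e (fst q) + 1) * (dl e (snd q) + 1))"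
        by (rule cc_par[OF D(8,9,7)])
      show "sgnv (cc e J L + dl e J) (sgnv (dl e J - 1) (br v (pb br e (fst q) (snd q) (H (fst q)) (H (snd q))))) =
          T1 (fst q) (snd q) + T1 (snd q) (fst q)"
        unfolding pb_def br_sgnv2 j a T1_def using p
        by (cases "even (dl e (fst q))"; cases "even (dl e (snd q))"; cases "even (dl e J)";
            cases "even (cc e (fst q) (snd q))"; cases "even (cc e (snd q) (fst q))"; cases "even (cc e J L)";
            simp add: sgnv_def even_add even_mult_iff algebra_simps)
    qed simp
    finally show ?thesis .
  qed
  have sw: "(\<Sum>q\<in>osp L. T1 (snd q) (fst q)) = (\<Sum>q\<in>osp L. T1 (fst q) (snd q))"
    by (rule sum.reindex_bij_witness[where i = prod.swap and j = prod.swap]) (auto simp: osp_def)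
  have eqR: "RHS = (\<Sum>q\<in>osp L. T1 (fst q) (snd q))"
  proof -
    have "(RHS - (\<Sum>q\<in>osp L. T1 (fst q) (snd q))) + (RHS - (\<Sum>q\<in>osp L. T1 (fst q) (snd q))) = 0"
      using st4 sw by (simp add: sum.distrib algebra_simps)
    hence "RHS - (\<Sum>q\<in>osp L. T1 (fst q) (snd q)) = 0" by (rule two_tf)
    thus ?thesis by simp
  qed
  have dG: "d (gG br e J v H K) = pb br e J L (d v) (H L) + RHS"
  proof -
    have KJ: "K - J = L" unfolding L_def ..
    have dHL: "d (H L) = YY br e H L" using dH[of L] L unfolding L_def by auto
    show ?thesis unfolding gG_def KJ d_sgnv leib[OF v] dHL pb_def RHS_def sgnv_plus ..
  qed
  have gJL: "g (J, L) = pb br e J L (d v) (H L)" unfolding g_def Dl_def by simp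
  have s5: "sum (g \<circ> (\<lambda>q. (J \<union> fst q, snd q))) (osp L) = (\<Sum>q\<in>osp L. T1 (fst q) (snd q))"
    by (rule sum.cong[OF refl st3])
  show ?thesis
    unfolding st1[unfolded H'_def] st2 gJL dG eqR s5 ..
qed

end

definition ks :: "(nat \<Rightarrow> 'k::ab_group_add) \<Rightarrow> nat set \<Rightarrow> 'k" where
  "ks kk A = (\<Sum>i\<in>A. kk i)"

lemma dl_single[simp]: "dl e {j} = e j" by (simp add: dl_def)
lemma ks_single[simp]: "ks kk {j} = kk j" by (simp add: ks_def)

locale MG = DG s Gd br d for s :: "complex \<Rightarrow> 'v::ab_group_add \<Rightarrow> 'v" and Gd br d +
  fixes Gm :: "'k::ab_group_add \<Rightarrow> 'v set"
  assumes MGa: "momentum_grading s Gd br d Gm"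
begin

lemma sub_Gm: "module.subspace s (Gm k)" using MGa by (simp add: momentum_grading_def is_dirsum_def)
lemma Gm_0[simp]: "0 \<in> Gm a" by (rule module.subspace_0[OF md sub_Gm])
lemma Gm_add: "x \<in> Gm a \<Longrightarrow> y \<in> Gm a \<Longrightarrow> x + y \<in> Gm a" by (rule module.subspace_add[OF md sub_Gm])
lemma Gm_neg: "x \<in> Gm a \<Longrightarrow> - x \<in> Gm a" by (rule module.subspace_neg[OF md sub_Gm])
lemma Gm_diff: "x \<in> Gm a \<Longrightarrow> y \<in> Gm a \<Longrightarrow> x - y \<in> Gm a" by (rule module.subspace_diff[OF md sub_Gm])
lemma Gm_sum: "(\<And>x. x \<in> S \<Longrightarrow> f x \<in> Gm a) \<Longrightarrow> sum f S \<in> Gm a" by (rule module.subspace_sum[OF md sub_Gm])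
lemma Gm_sgnv: "x \<in> Gm a \<Longrightarrow> sgnv b x \<in> Gm a" by (auto simp: sgnv_def Gm_neg)
lemma Gm_d': "\<forall>k x. x \<in> Gm k \<longrightarrow> d x \<in> Gm k"
  using MGa unfolding momentum_grading_def by (elim conjE) assumption
lemma Gm_br': "\<forall>k l x y. x \<in> Gm k \<longrightarrow> y \<in> Gm l \<longrightarrow> br x y \<in> Gm (k + l)"
  using MGa unfolding momentum_grading_def by (elim conjE) assumption
lemma Gm_d: "x \<in> Gm k \<Longrightarrow> d x \<in> Gm k" using Gm_d' by blast
lemma Gm_br: "x \<in> Gm k \<Longrightarrow> y \<in> Gm l \<Longrightarrow> br x y \<in> Gm (k + l)" using Gm_br' by blast

lemma Y_local':
  assumes "\<And>A. A \<subseteq> K \<Longrightarrow> A \<noteq> K \<Longrightarrow> A \<noteq> {} \<Longrightarrow> H A = H' A"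
  shows "YY br e H K = YY br e H' K"
  unfolding YY_def
proof (rule sum.cong)
  fix p assume "p \<in> msp K"
  hence "fst p \<subseteq> K" "snd p \<subseteq> K" "fst p \<noteq> K" "snd p \<noteq> K" "fst p \<noteq> {}" "snd p \<noteq> {}"
    by (auto simp: msp_def osp_def) blast+
  thus "pb br e (fst p) (snd p) (H (fst p)) (H (snd p)) = pb br e (fst p) (snd p) (H' (fst p)) (H' (snd p))"
    using assms by simp
qed simp

lemma ks_Un: "finite A \<Longrightarrow> finite B \<Longrightarrow> A \<inter> B = {} \<Longrightarrow> ks kk (A \<union> B) = ks kk A + ks kk B"
  unfolding ks_def by (rule sum.union_disjoint)

lemma Y_Gm:
  assumes "finite K" "\<And>A. A \<subseteq> K \<Longrightarrow> A \<noteq> {} \<Longrightarrow> A \<noteq> K \<Longrightarrow> H A \<in> Gm (ks kk A)"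
  shows "YY br e H K \<in> Gm (ks kk K)"
  unfolding YY_def
proof (rule Gm_sum)
  fix p assume "p \<in> msp K"
  hence p: "p \<in> osp K" by (rule msp_osp)
  note D = osp_D[of "fst p" "snd p" K, simplified, OF p assms(1)]
  have "br (H (fst p)) (H (snd p)) \<in> Gm (ks kk (fst p) + ks kk (snd p))"
    using Gm_br assms(2) D by auto
  thus "pb br e (fst p) (snd p) (H (fst p)) (H (snd p)) \<in> Gm (ks kk K)"
    unfolding pb_def using ks_Un[OF D(8,9,7), of kk] D(10) Gm_sgnv by simp
qed

definition DS :: "nat set \<Rightarrow> (nat \<Rightarrow> int) \<Rightarrow> (nat \<Rightarrow> 'k) \<Rightarrow> (nat \<Rightarrow> 'v) \<Rightarrow> (nat set \<Rightarrow> 'v) \<Rightarrow> bool" where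
  "DS N e kk z H \<longleftrightarrow> (\<forall>A. A \<subseteq> N \<and> A \<noteq> {} \<and> A \<noteq> N \<longrightarrow>
      H A \<in> Gd (dl e A) \<and> H A \<in> Gm (ks kk A) \<and> d (H A) = YY br e H A \<and>
      (\<forall>j. A = {j} \<longrightarrow> (\<exists>u. u \<in> Gd (e j - 1) \<and> u \<in> Gm (kk j) \<and> H A = z j - d u)))"

lemma DS_hom: "DS N e kk z H \<Longrightarrow> K \<subseteq> N \<Longrightarrow> hom e H K"
  unfolding DS_def hom_def by auto

lemma GM:
  assumes fN: "finite N" and H: "DS N e kk z H" and J: "J \<subseteq> N" "J \<noteq> {}" "J \<noteq> N"
    and v: "v \<in> Gd (dl e J - 1)" "v \<in> Gm (ks kk J)"
  shows "DS N e kk z (gmove br d e J v H)" "YY br e (gmove br d e J v H) N - YY br e H N \<in> range d"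
proof -
  define H' where "H' = gmove br d e J v H"
  have fJ: "finite J" using J fN finite_subset by blast
  have Hs: "H A \<in> Gd (dl e A)" "H A \<in> Gm (ks kk A)" "d (H A) = YY br e H A"
    if "A \<subseteq> N" "A \<noteq> {}" "A \<noteq> N" for A using H that unfolding DS_def by auto
  have nsub: "H' A = H A" if "\<not> J \<subseteq> A" for A
    unfolding H'_def gmove_def using that by auto
  have YJ: "YY br e H' A = YY br e H A" if "\<not> J \<subseteq> A \<or> A = J" for A
  proof (rule Y_local')
    fix B assume "B \<subseteq> A" "B \<noteq> A" "B \<noteq> {}"
    hence "\<not> J \<subseteq> B" using that by auto
    thus "H' B = H B" by (rule nsub)
  qed
  have big: "YY br e H' K - YY br e H K = d (gG br e J v H K)" if K: "K \<subseteq> N" "J \<subseteq> K" "J \<noteq> K" for K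
    unfolding H'_def
  proof (rule GL)
    show "finite K" using K fN finite_subset by blast
    show "hom e H K" by (rule DS_hom[OF H K(1)])
    fix C assume "C \<subseteq> K - J" "C \<noteq> {}"
    thus "d (H C) = YY br e H C" using Hs(3)[of C] K J by auto
  qed (use K J v in auto)
  have dv: "d v \<in> Gd (dl e J)" "d v \<in> Gm (ks kk J)" using Gd_d[OF v(1)] Gm_d[OF v(2)] by auto
  have gGs: "gG br e J v H A \<in> Gd (dl e A) \<and> gG br e J v H A \<in> Gm (ks kk A)"
    if "A \<subseteq> N" "J \<subseteq> A" "A \<noteq> J" for A
  proof
    have fA: "finite A" using that fN finite_subset by blast
    have AJ: "A - J \<subseteq> N" "A - J \<noteq> {}" "A - J \<noteq> N" using that J by auto
    show "gG br e J v H A \<in> Gd (dl e A)" by (rule gG_Gd[where H=H, OF fA that(2) v(1) Hs(1)[OF AJ]])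
    have "br v (H (A - J)) \<in> Gm (ks kk J + ks kk (A - J))" by (rule Gm_br[OF v(2) Hs(2)[OF AJ]])
    moreover have "ks kk J + ks kk (A - J) = ks kk A"
      using ks_Un[OF fJ finite_Diff[OF fA], of J kk] that(2) by (simp add: Un_absorb1)
    ultimately show "gG br e J v H A \<in> Gm (ks kk A)" unfolding gG_def using Gm_sgnv by simp
  qed
  have DSH': "DS N e kk z H'"
    unfolding DS_def
  proof (intro allI impI conjI)
    fix A assume A: "A \<subseteq> N \<and> A \<noteq> {} \<and> A \<noteq> N"
    hence A': "A \<subseteq> N" "A \<noteq> {}" "A \<noteq> N" by auto
    consider (eq) "A = J" | (sup) "J \<subseteq> A" "A \<noteq> J" | (no) "\<not> J \<subseteq> A" by blast
    note cs = this
    show "H' A \<in> Gd (dl e A)"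
      using cs proof cases
      case eq thus ?thesis unfolding H'_def gmove_def using Gd_add[OF Hs(1)[OF A'] dv(1)[folded eq]] by simp
    next
      case sup thus ?thesis unfolding H'_def gmove_def using Gd_add[OF Hs(1)[OF A'] conjunct1[OF gGs[OF A'(1) sup]]] by simp
    next
      case no thus ?thesis using nsub Hs(1)[OF A'] by simp
    qed
    show "H' A \<in> Gm (ks kk A)"
      using cs proof cases
      case eq thus ?thesis unfolding H'_def gmove_def using Gm_add[OF Hs(2)[OF A'] dv(2)[folded eq]] by simp
    next
      case sup thus ?thesis unfolding H'_def gmove_def using Gm_add[OF Hs(2)[OF A'] conjunct2[OF gGs[OF A'(1) sup]]] by simp
    next
      case no thus ?thesis using nsub Hs(2)[OF A'] by simp
    qed
    show "d (H' A) = YY br e H' A"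
      using cs proof cases
      case eq
      have "H' A = H A + d v" unfolding H'_def gmove_def using eq by simp
      hence "d (H' A) = d (H A)" by (simp add: d_add)
      thus ?thesis using Hs(3)[OF A'] YJ[of A] eq by simp
    next
      case sup
      have "H' A = H A + gG br e J v H A" unfolding H'_def gmove_def using sup by simp
      hence "d (H' A) = d (H A) + d (gG br e J v H A)" by (simp add: d_add)
      also have "\<dots> = YY br e H A + (YY br e H' A - YY br e H A)" using Hs(3)[OF A'] big[OF A'(1) sup(1) sup(2)[symmetric]] by simp
      finally show ?thesis by simp
    next
      case no thus ?thesis using nsub Hs(3)[OF A'] YJ[of A] by simp
    qed
    fix j assume Aj: "A = {j}"
      obtain u where u: "u \<in> Gd (e j - 1)" "u \<in> Gm (kk j)" "H A = z j - d u"
        using H A Aj unfolding DS_def by blast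
      show "\<exists>u. u \<in> Gd (e j - 1) \<and> u \<in> Gm (kk j) \<and> H' A = z j - d u"
      proof (cases "J = A")
        case True
        hence "J = {j}" using Aj by simp
        hence vv: "v \<in> Gd (e j - 1)" "v \<in> Gm (kk j)" using v by auto
        have "H' A = z j - d (u - v)" unfolding H'_def gmove_def using True u(3) by (simp add: d_diff)
        thus ?thesis using Gd_diff[OF u(1) vv(1)] Gm_diff[OF u(2) vv(2)] by blast
      next
        case False
        hence "\<not> J \<subseteq> A" using Aj J(2) by auto
        thus ?thesis using nsub u by auto
      qed
  qed
  show "DS N e kk z (gmove br d e J v H)" using DSH' unfolding H'_def .
  show "YY br e (gmove br d e J v H) N - YY br e H N \<in> range d"
    using big[of N] J unfolding H'_def by auto
qed

lemma IT:
  assumes fN: "finite N" and H1: "DS N e kk z H1" and H2: "DS N e kk z H2"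
    and AC: "\<And>J c. J \<subseteq> N \<Longrightarrow> 1 < card J \<Longrightarrow> card J < card N \<Longrightarrow> c \<in> Gd (dl e J) \<Longrightarrow> c \<in> Gm (ks kk J) \<Longrightarrow> d c = 0
             \<Longrightarrow> \<exists>v. v \<in> Gd (dl e J - 1) \<and> v \<in> Gm (ks kk J) \<and> d v = c"
  shows "YY br e H1 N - YY br e H2 N \<in> range d"
proof -
  define agree where "agree m H \<longleftrightarrow> (\<forall>A. A \<subseteq> N \<and> A \<noteq> {} \<and> A \<noteq> N \<and> card A < m \<longrightarrow> H A = H2 A)" for m H
  define P where "P m \<longleftrightarrow> (\<forall>H. DS N e kk z H \<and> agree m H \<longrightarrow> YY br e H N - YY br e H2 N \<in> range d)" for m
  have H2s: "H2 A \<in> Gd (dl e A)" "H2 A \<in> Gm (ks kk A)" "d (H2 A) = YY br e H2 A"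
    if "A \<subseteq> N" "A \<noteq> {}" "A \<noteq> N" for A using H2 that unfolding DS_def by auto
  have rd: "a - b \<in> range d \<Longrightarrow> b - c \<in> range d \<Longrightarrow> a - c \<in> range d" for a b c
  proof -
    assume "a - b \<in> range d" "b - c \<in> range d"
    then obtain x y where "a - b = d x" "b - c = d y" by blast
    hence "a - c = d (x + y)" by (simp add: d_add algebra_simps)
    thus ?thesis by blast
  qed
  have base: "P (card N)"
    unfolding P_def
  proof (intro allI impI)
    fix H assume H: "DS N e kk z H \<and> agree (card N) H"
    have "YY br e H N = YY br e H2 N"
    proof (rule Y_local')
      fix A assume A: "A \<subseteq> N" "A \<noteq> N" "A \<noteq> {}"
      have "card A < card N" using A fN by (simp add: psubset_card_mono)
      thus "H A = H2 A" using H A unfolding agree_def by auto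
    qed
    hence "YY br e H N - YY br e H2 N = d 0" by simp
    thus "YY br e H N - YY br e H2 N \<in> range d" by blast
  qed
  have step: "P m" if m: "m < card N" and IH: "P (Suc m)" for m
  proof -
    define Lv where "Lv = {A. A \<subseteq> N \<and> A \<noteq> {} \<and> A \<noteq> N \<and> card A = m}"
    have fLv: "finite Lv" unfolding Lv_def by (rule finite_subset[of _ "Pow N"]) (use fN in auto)
    have inner: "\<forall>H. DS N e kk z H \<and> agree m H \<and> (\<forall>A\<in>Lv - S. H A = H2 A) \<longrightarrow> YY br e H N - YY br e H2 N \<in> range d"
      if "finite S" "S \<subseteq> Lv" for S
      using that
    proof (induction S rule: finite_induct)
      case empty
      show ?case
      proof (intro allI impI)
        fix H assume H: "DS N e kk z H \<and> agree m H \<and> (\<forall>A\<in>Lv - {}. H A = H2 A)"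
        have "agree (Suc m) H" unfolding agree_def
        proof (intro allI impI)
          fix A assume A: "A \<subseteq> N \<and> A \<noteq> {} \<and> A \<noteq> N \<and> card A < Suc m"
          show "H A = H2 A"
          proof (cases "card A = m")
            case True hence "A \<in> Lv" using A unfolding Lv_def by auto
            thus ?thesis using H by auto
          next
            case False hence "card A < m" using A by auto
            thus ?thesis using H A unfolding agree_def by auto
          qed
        qed
        thus "YY br e H N - YY br e H2 N \<in> range d" using IH H unfolding P_def by blast
      qed
    next
      case (insert J S)
      have JL: "J \<in> Lv" using insert.prems by auto
      hence J: "J \<subseteq> N" "J \<noteq> {}" "J \<noteq> N" "card J = m" unfolding Lv_def by auto
      have fJ: "finite J" using J fN finite_subset by blast
      show ?case
      proof (intro allI impI)
        fix H assume H: "DS N e kk z H \<and> agree m H \<and> (\<forall>A\<in>Lv - insert J S. H A = H2 A)"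
        have Hs: "H A \<in> Gd (dl e A)" "H A \<in> Gm (ks kk A)" "d (H A) = YY br e H A"
          if "A \<subseteq> N" "A \<noteq> {}" "A \<noteq> N" for A using H that unfolding DS_def by auto
        obtain v where v: "v \<in> Gd (dl e J - 1)" "v \<in> Gm (ks kk J)" "d v = H2 J - H J"
        proof (cases "card J = 1")
          case True
          then obtain j where j: "J = {j}" by (rule card_1_singletonE)
          obtain u1 where u1: "u1 \<in> Gd (e j - 1)" "u1 \<in> Gm (kk j)" "H J = z j - d u1"
            using H J j unfolding DS_def by blast
          obtain u2 where u2: "u2 \<in> Gd (e j - 1)" "u2 \<in> Gm (kk j)" "H2 J = z j - d u2"
            using H2 J j unfolding DS_def by blast
          have "d (u1 - u2) = H2 J - H J" using u1 u2 by (simp add: d_diff)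
          thus ?thesis using that[of "u1 - u2"] Gd_diff[OF u1(1) u2(1)] Gm_diff[OF u1(2) u2(2)] j by simp
        next
          case False
          moreover have "card J \<noteq> 0" using J(2) fJ by (simp add: card_eq_0_iff)
          ultimately have c1: "1 < card J" by linarith
          have c2: "card J < card N" using psubset_card_mono[OF fN, of J] J by auto
          define c where "c = H2 J - H J"
          have cGd: "c \<in> Gd (dl e J)" unfolding c_def by (rule Gd_diff[OF H2s(1) Hs(1)]) (use J in auto)
          have cGm: "c \<in> Gm (ks kk J)" unfolding c_def by (rule Gm_diff[OF H2s(2) Hs(2)]) (use J in auto)
          have "YY br e H2 J = YY br e H J"
          proof (rule Y_local')
            fix A assume A: "A \<subseteq> J" "A \<noteq> J" "A \<noteq> {}"
            have "card A < m" using psubset_card_mono[OF fJ, of A] A J(4) by auto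
            moreover have "A \<subseteq> N" "A \<noteq> N" using A J by auto
            ultimately show "H2 A = H A" using H A(3) unfolding agree_def by auto
          qed
          hence "d c = 0" unfolding c_def d_diff using H2s(3)[OF J(1-3)] Hs(3)[OF J(1-3)] by simp
          then obtain v where "v \<in> Gd (dl e J - 1) \<and> v \<in> Gm (ks kk J) \<and> d v = c"
            using AC[OF J(1) c1 c2 cGd cGm] by blast
          thus ?thesis using that c_def by blast
        qed
        define H' where "H' = gmove br d e J v H"
        have DS': "DS N e kk z H'" and R1: "YY br e H' N - YY br e H N \<in> range d"
          using GM[OF fN conjunct1[OF H] J(1-3) v(1,2)] unfolding H'_def by auto
        have nsub: "H' A = H A" if "\<not> J \<subseteq> A" for A
          unfolding H'_def gmove_def using that by auto
        have ag: "agree m H'" unfolding agree_def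
        proof (intro allI impI)
          fix A assume A: "A \<subseteq> N \<and> A \<noteq> {} \<and> A \<noteq> N \<and> card A < m"
          have "\<not> J \<subseteq> A"
          proof
            assume "J \<subseteq> A"
            hence "card J \<le> card A" using A fN by (meson card_mono finite_subset)
            thus False using A J(4) by simp
          qed
          thus "H' A = H2 A" using nsub H A unfolding agree_def by auto
        qed
        have rest: "\<forall>A\<in>Lv - S. H' A = H2 A"
        proof
          fix A assume A: "A \<in> Lv - S"
          show "H' A = H2 A"
          proof (cases "A = J")
            case True
            have "H' J = H J + d v" unfolding H'_def gmove_def by simp
            thus ?thesis using True v(3) by simp
          next
            case False
            have "A \<in> Lv - insert J S" using A False by auto
            hence AL: "A \<subseteq> N" "card A = m" unfolding Lv_def by auto
            have "\<not> J \<subseteq> A"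
            proof
              assume "J \<subseteq> A"
              hence "J = A" using card_subset_eq[of A J] AL J(4) fN finite_subset by metis
              thus False using False by simp
            qed
            thus ?thesis using nsub H \<open>A \<in> Lv - insert J S\<close> by auto
          qed
        qed
        have "YY br e H' N - YY br e H2 N \<in> range d"
          using insert.IH insert.prems DS' ag rest by auto
        moreover have "YY br e H N - YY br e H' N \<in> range d"
        proof -
          obtain x where "YY br e H' N - YY br e H N = d x" using R1 by blast
          hence "YY br e H N - YY br e H' N = d (- x)" by (simp add: d_neg algebra_simps)
          thus ?thesis by blast
        qed
        ultimately show "YY br e H N - YY br e H2 N \<in> range d" using rd by blast
      qed
    qed
    show ?thesis unfolding P_def
    proof (intro allI impI)
      fix H assume "DS N e kk z H \<and> agree m H"
      thus "YY br e H N - YY br e H2 N \<in> range d"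
        using inner[OF fLv subset_refl] by auto
    qed
  qed
  have "P 0"
  proof (rule inc_induct[of 0 "card N" P])
    show "P (card N)" by (rule base)
    fix m assume "0 \<le> m" "m < card N" "P (Suc m)"
    thus "P m" using step by blast
  qed simp
  moreover have "agree 0 H1" unfolding agree_def by simp
  ultimately show ?thesis using H1 unfolding P_def by blast
qed

end

definition Tc :: "nat set \<Rightarrow> ptree set" where
  "Tc K = {t. distinct (leaves t) \<and> set (leaves t) = K \<and> canonical t}"

fun lch :: "ptree \<Rightarrow> ptree" where "lch (Node l r) = l" | "lch (Leaf j) = Leaf j"
fun rch :: "ptree \<Rightarrow> ptree" where "rch (Node l r) = r" | "rch (Leaf j) = Leaf j"

lemma leaves_ne: "leaves t \<noteq> []"
  by (induction t) auto

lemma set_leaves_ne: "set (leaves t) \<noteq> {}"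
  using leaves_ne by simp

lemma Node_Tc: "Node l r \<in> Tc K \<longleftrightarrow>
   (set (leaves l), set (leaves r)) \<in> msp K \<and> l \<in> Tc (set (leaves l)) \<and> r \<in> Tc (set (leaves r))"
  unfolding Tc_def msp_def osp_def using set_leaves_ne[of l] set_leaves_ne[of r]
  by auto

lemma Leaf_Tc: "Leaf j \<in> Tc K \<longleftrightarrow> K = {j}"
  unfolding Tc_def by auto

lemma Tc_single: "Tc {a} = {Leaf a}"
proof (intro equalityI subsetI)
  fix t assume t: "t \<in> Tc {a}"
  show "t \<in> {Leaf a}"
  proof (cases t)
    case (Leaf j) thus ?thesis using t Leaf_Tc by auto
  next
    case (Node l r)
    hence "(set (leaves l), set (leaves r)) \<in> msp {a}" using t Node_Tc by auto
    thus ?thesis by (simp add: msp_single)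
  qed
qed (simp add: Leaf_Tc)

lemma Tc_notleaf: "t \<in> Tc K \<Longrightarrow> 2 \<le> card K \<Longrightarrow> \<not> is_leaf t"
  by (cases t) (auto simp: Leaf_Tc)

lemma finite_Tc: "finite K \<Longrightarrow> finite (Tc K)"
proof (induction K rule: finite_psubset_induct)
  case (psubset K)
  have sub: "Tc K \<subseteq> Leaf ` K \<union> (\<lambda>(l,r). Node l r) ` (\<Union>p\<in>msp K. Tc (fst p) \<times> Tc (snd p))"
  proof
    fix t assume t: "t \<in> Tc K"
    show "t \<in> Leaf ` K \<union> (\<lambda>(l,r). Node l r) ` (\<Union>p\<in>msp K. Tc (fst p) \<times> Tc (snd p))"
    proof (cases t)
      case (Leaf j) thus ?thesis using t Leaf_Tc by auto
    next
      case (Node l r)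
      hence "(set (leaves l), set (leaves r)) \<in> msp K" "l \<in> Tc (set (leaves l))" "r \<in> Tc (set (leaves r))"
        using t Node_Tc by auto
      thus ?thesis unfolding Node by force
    qed
  qed
  have "finite (\<Union>p\<in>msp K. Tc (fst p) \<times> Tc (snd p))"
  proof (rule finite_UN_I)
    show "finite (msp K)" by (rule finite_msp[OF psubset.hyps])
    fix p assume p: "p \<in> msp K"
    hence "fst p \<subset> K" "snd p \<subset> K" using osp_D[of "fst p" "snd p" K] msp_osp[OF p] psubset.hyps by auto
    thus "finite (Tc (fst p) \<times> Tc (snd p))" using psubset.IH by blast
  qed
  thus ?case using finite_subset[OF sub] psubset.hyps by blast
qed

lemma sum_Tc:
  assumes "finite K" "2 \<le> card K"
  shows "sum f (Tc K) = (\<Sum>p\<in>msp K. \<Sum>l\<in>Tc (fst p). \<Sum>r\<in>Tc (snd p). f (Node l r))"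
proof -
  have fin: "\<forall>p\<in>msp K. finite (Tc (fst p) \<times> Tc (snd p))"
  proof
    fix p assume p: "p \<in> msp K"
    hence "finite (fst p)" "finite (snd p)" using osp_D[of "fst p" "snd p" K] msp_osp[OF p] assms(1) by auto
    thus "finite (Tc (fst p) \<times> Tc (snd p))" using finite_Tc by blast
  qed
  have "(\<Sum>p\<in>msp K. \<Sum>l\<in>Tc (fst p). \<Sum>r\<in>Tc (snd p). f (Node l r)) =
     (\<Sum>p\<in>msp K. \<Sum>lr\<in>Tc (fst p) \<times> Tc (snd p). f (Node (fst lr) (snd lr)))"
    by (rule sum.cong[OF refl]) (simp add: sum.cartesian_product case_prod_unfold)
  also have "\<dots> = (\<Sum>z\<in>Sigma (msp K) (\<lambda>p. Tc (fst p) \<times> Tc (snd p)). f (Node (fst (snd z)) (snd (snd z))))"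
    by (subst sum.Sigma[OF finite_msp[OF assms(1)] fin]) (simp add: case_prod_unfold)
  also have "\<dots> = sum f (Tc K)"
  proof (rule sum.reindex_bij_witness[where i = "\<lambda>t. ((set (leaves (lch t)), set (leaves (rch t))), (lch t, rch t))"
         and j = "\<lambda>z. Node (fst (snd z)) (snd (snd z))"])
    fix t assume t: "t \<in> Tc K"
    then obtain l r where tlr: "t = Node l r" using Tc_notleaf[OF t assms(2)] by (cases t) auto
    show "Node (fst (snd ((set (leaves (lch t)), set (leaves (rch t))), lch t, rch t)))
           (snd (snd ((set (leaves (lch t)), set (leaves (rch t))), lch t, rch t))) = t"
      unfolding tlr by simp
    show "((set (leaves (lch t)), set (leaves (rch t))), lch t, rch t) \<in> Sigma (msp K) (\<lambda>p. Tc (fst p) \<times> Tc (snd p))"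
      using t unfolding tlr Node_Tc by simp
  next
    fix z assume z: "z \<in> Sigma (msp K) (\<lambda>p. Tc (fst p) \<times> Tc (snd p))"
    obtain A B l r where zz: "z = ((A, B), (l, r))" by (metis prod.collapse)
    have AB: "(A,B) \<in> msp K" "l \<in> Tc A" "r \<in> Tc B" using z unfolding zz by auto
    have sl: "set (leaves l) = A" "set (leaves r) = B" using AB unfolding Tc_def by auto
    show "((set (leaves (lch (Node (fst (snd z)) (snd (snd z))))), set (leaves (rch (Node (fst (snd z)) (snd (snd z)))))),
        lch (Node (fst (snd z)) (snd (snd z))), rch (Node (fst (snd z)) (snd (snd z)))) = z"
      unfolding zz using sl by simp
    show "Node (fst (snd z)) (snd (snd z)) \<in> Tc K" unfolding zz Node_Tc using AB sl by simp
  qed simp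
  finally show ?thesis ..
qed

definition invs :: "(nat \<Rightarrow> int) \<Rightarrow> nat list \<Rightarrow> nat" where
  "invs e w = card {(p, q). p < q \<and> q < length w \<and> w ! p > w ! q \<and> even (e (w ! p)) \<and> even (e (w ! q))}"

lemma invs_append:
  assumes dist: "distinct (u @ v)"
  shows "invs e (u @ v) = invs e u + invs e v + card {(a,b). a \<in> set u \<and> b \<in> set v \<and> b < a \<and> even (e a) \<and> even (e b)}"
proof -
  define m where "m = length u"
  define k where "k = length v"
  define w where "w = u @ v"
  have du: "distinct u" and dv: "distinct v" using dist by auto
  define S where "S = {(p, q). p < q \<and> q < length w \<and> w ! p > w ! q \<and> even (e (w ! p)) \<and> even (e (w ! q))}"
  define S1 where "S1 = {(p, q). p < q \<and> q < length u \<and> u ! p > u ! q \<and> even (e (u ! p)) \<and> even (e (u ! q))}"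
  define S3' where "S3' = {(p, q). p < q \<and> q < length v \<and> v ! p > v ! q \<and> even (e (v ! p)) \<and> even (e (v ! q))}"
  define S3 where "S3 = (\<lambda>(p,q). (p + m, q + m)) ` S3'"
  define S2 where "S2 = {(p, q). p < m \<and> m \<le> q \<and> q < m + k \<and> v ! (q - m) < u ! p \<and> even (e (u ! p)) \<and> even (e (v ! (q - m)))}"
  define C where "C = {(a,b). a \<in> set u \<and> b \<in> set v \<and> b < a \<and> even (e a) \<and> even (e b)}"
  have wn: "w ! i = (if i < m then u ! i else v ! (i - m))" for i
    unfolding w_def m_def by (simp add: nth_append)
  have lw: "length w = m + k" unfolding w_def m_def k_def by simp
  have Seq: "S = S1 \<union> S2 \<union> S3"
  proof (intro equalityI subsetI)
    fix x assume x: "x \<in> S"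
    obtain p q where xpq: "x = (p,q)" by force
    have P: "p < q" "q < m + k" "w ! p > w ! q" "even (e (w ! p))" "even (e (w ! q))"
      using x lw unfolding S_def xpq by auto
    show "x \<in> S1 \<union> S2 \<union> S3"
    proof (cases "q < m")
      case True
      hence "x \<in> S1" using P wn[of p] wn[of q] unfolding S1_def xpq m_def by auto
      thus ?thesis by blast
    next
      case False
      show ?thesis
      proof (cases "p < m")
        case True
        hence "x \<in> S2" using P wn[of p] wn[of q] False unfolding S2_def xpq by auto
        thus ?thesis by blast
      next
        case False
        hence "(p - m, q - m) \<in> S3'" using P wn[of p] wn[of q] \<open>\<not> q < m\<close> unfolding S3'_def k_def by auto
        moreover have "x = (\<lambda>(p,q). (p + m, q + m)) (p - m, q - m)" using False \<open>\<not> q < m\<close> xpq by auto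
        ultimately have "x \<in> S3" unfolding S3_def by blast
        thus ?thesis by blast
      qed
    qed
  next
    fix x assume x: "x \<in> S1 \<union> S2 \<union> S3"
    obtain p q where xpq: "x = (p,q)" by force
    show "x \<in> S"
    proof -
      { assume "x \<in> S1"
        hence "p < q" "q < m" "u ! p > u ! q" "even (e (u ! p))" "even (e (u ! q))"
          unfolding S1_def xpq m_def by auto
        hence ?thesis unfolding S_def xpq using wn[of p] wn[of q] lw by auto }
      moreover
      { assume "x \<in> S2"
        hence "p < m" "m \<le> q" "q < m + k" "v ! (q - m) < u ! p" "even (e (u ! p))" "even (e (v ! (q - m)))"
          unfolding S2_def xpq by auto
        hence ?thesis unfolding S_def xpq using wn[of p] wn[of q] lw by auto }
      moreover
      { assume "x \<in> S3"
        then obtain p' q' where "(p', q') \<in> S3'" "p = p' + m" "q = q' + m" unfolding S3_def xpq by auto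
        hence "p' < q'" "q' < k" "v ! p' > v ! q'" "even (e (v ! p'))" "even (e (v ! q'))" "p = p' + m" "q = q' + m"
          unfolding S3'_def k_def by auto
        hence ?thesis unfolding S_def xpq using wn[of p] wn[of q] lw by auto }
      ultimately show ?thesis using x by blast
    qed
  qed
  have fin: "finite X" if "X \<subseteq> {..<m+k} \<times> {..<m+k}" for X
    using that finite_subset by blast
  have f1: "finite S1" by (rule fin) (auto simp: S1_def m_def)
  have f2: "finite S2" by (rule fin) (auto simp: S2_def)
  have f3': "finite S3'" by (rule finite_subset[of _ "{..<k} \<times> {..<k}"]) (auto simp: S3'_def k_def)
  have f3: "finite S3" unfolding S3_def using f3' by blast
  have d12: "S1 \<inter> S2 = {}" by (auto simp: S1_def S2_def m_def)
  have d3: "(S1 \<union> S2) \<inter> S3 = {}" by (auto simp: S1_def S2_def S3_def m_def)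
  have cS: "card S = card S1 + card S2 + card S3"
    unfolding Seq card_Un_disjoint[OF finite_UnI[OF f1 f2] f3 d3] card_Un_disjoint[OF f1 f2 d12] ..
  have c3: "card S3 = card S3'"
    unfolding S3_def by (rule card_image) (auto simp: inj_on_def)
  have c2: "card S2 = card C"
  proof (rule bij_betw_same_card[where f = "\<lambda>(p,q). (u ! p, v ! (q - m))"])
    show "bij_betw (\<lambda>(p,q). (u ! p, v ! (q - m))) S2 C"
      unfolding bij_betw_def
    proof
      show "inj_on (\<lambda>(p,q). (u ! p, v ! (q - m))) S2"
      proof (rule inj_onI)
        fix x y assume x: "x \<in> S2" and y: "y \<in> S2" and eq: "(\<lambda>(p,q). (u ! p, v ! (q - m))) x = (\<lambda>(p,q). (u ! p, v ! (q - m))) y"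
        obtain p q p' q' where xy: "x = (p,q)" "y = (p',q')" by force
        have r: "p < m" "m \<le> q" "q < m + k" "p' < m" "m \<le> q'" "q' < m + k" using x y unfolding xy S2_def by auto
        have "u ! p = u ! p'" "v ! (q - m) = v ! (q' - m)" using eq unfolding xy by auto
        hence "p = p'" "q - m = q' - m"
          using nth_eq_iff_index_eq[OF du] nth_eq_iff_index_eq[OF dv] r unfolding m_def k_def by auto
        thus "x = y" using r xy by auto
      qed
      show "(\<lambda>(p,q). (u ! p, v ! (q - m))) ` S2 = C"
      proof (intro equalityI subsetI)
        fix y assume "y \<in> (\<lambda>(p,q). (u ! p, v ! (q - m))) ` S2"
        then obtain p q where "(p,q) \<in> S2" "y = (u ! p, v ! (q - m))" by auto
        thus "y \<in> C" unfolding S2_def C_def m_def k_def by auto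
      next
        fix y assume "y \<in> C"
        then obtain a b where ab: "y = (a,b)" "a \<in> set u" "b \<in> set v" "b < a" "even (e a)" "even (e b)"
          unfolding C_def by auto
        obtain p where p: "p < m" "u ! p = a" using ab(2) unfolding m_def in_set_conv_nth by auto
        obtain j where j: "j < k" "v ! j = b" using ab(3) unfolding k_def in_set_conv_nth by auto
        have "(p, j + m) \<in> S2" unfolding S2_def using p j ab by auto
        moreover have "y = (\<lambda>(p,q). (u ! p, v ! (q - m))) (p, j + m)" using p j ab by simp
        ultimately show "y \<in> (\<lambda>(p,q). (u ! p, v ! (q - m))) ` S2" by blast
      qed
    qed
  qed
  show ?thesis
    unfolding invs_def w_def[symmetric] S_def[symmetric] S1_def[symmetric] S3'_def[symmetric] C_def[symmetric]
    using cS c2 c3 by simp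
qed


lemma tval_Node_fst: "fst (tval br h x e (Node l r)) =
   sgnv (if is_leaf l then snd (tval br h x e l) else snd (tval br h x e l) - 1)
     (br (if is_leaf l then fst (tval br h x e l) else h (fst (tval br h x e l)))
         (if is_leaf r then fst (tval br h x e r) else h (fst (tval br h x e r))))"
  by (simp add: Let_def case_prod_unfold)

lemma tval_Node_snd: "snd (tval br h x e (Node l r)) =
   (if is_leaf l then snd (tval br h x e l) else snd (tval br h x e l) - 1) +
   (if is_leaf r then snd (tval br h x e r) else snd (tval br h x e r) - 1)"
  by (simp add: Let_def case_prod_unfold)

lemma is_leaf_iff: "is_leaf t \<longleftrightarrow> (\<exists>j. t = Leaf j)" by (cases t) auto

lemma tval_deg: "distinct (leaves t) \<Longrightarrow>
   snd (tval br h x e t) = (if is_leaf t then dl e (set (leaves t)) else dl e (set (leaves t)) + 1)"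
proof (induction t)
  case (Leaf j) thus ?case by (simp add: dl_def)
next
  case (Node l r)
  have dl: "distinct (leaves l)" "distinct (leaves r)" "set (leaves l) \<inter> set (leaves r) = {}"
    using Node.prems by auto
  have a: "(if is_leaf l then snd (tval br h x e l) else snd (tval br h x e l) - 1) = dl e (set (leaves l))"
    using Node.IH(1)[OF dl(1)] by simp
  have b: "(if is_leaf r then snd (tval br h x e r) else snd (tval br h x e r) - 1) = dl e (set (leaves r))"
    using Node.IH(2)[OF dl(2)] by simp
  have u: "dl e (set (leaves l) \<union> set (leaves r)) = dl e (set (leaves l)) + dl e (set (leaves r)) - 1"
    by (rule dl_Un) (use dl in auto)
  show ?case unfolding tval_Node_snd a b using u by simp
qed

lemma invs_single: "invs e [a] = 0"
  unfolding invs_def by (auto simp: card_eq_0_iff)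

context DG begin

lemma br_sum_sum: "br (sum f A) (sum g B) = (\<Sum>a\<in>A. \<Sum>b\<in>B. br (f a) (g b))"
  unfolding br_sum1 by (simp only: br_sum2)

definition W :: "('v \<Rightarrow> 'v) \<Rightarrow> (nat \<Rightarrow> 'v) \<Rightarrow> (nat \<Rightarrow> int) \<Rightarrow> nat set \<Rightarrow> 'v" where
  "W h x e K = (\<Sum>t\<in>Tc K. sgnv (int (invs e (leaves t))) (fst (tval br h x e t)))"

definition Hh :: "('v \<Rightarrow> 'v) \<Rightarrow> (nat \<Rightarrow> 'v) \<Rightarrow> (nat \<Rightarrow> int) \<Rightarrow> nat set \<Rightarrow> 'v" where
  "Hh h x e K = (if card K = 1 then x (the_elem K) else h (W h x e K))"

lemma W_Y:
  assumes h: "module_hom s s h" and fK: "finite K" and cK: "2 \<le> card K"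
  shows "W h x e K = YY br e (Hh h x e) K"
proof -
  define Hv where "Hv t = (if is_leaf t then fst (tval br h x e t) else h (fst (tval br h x e t)))" for t
  have sub: "(\<Sum>l\<in>Tc A. sgnv (int (invs e (leaves l))) (Hv l)) = Hh h x e A" if A: "finite A" "A \<noteq> {}" for A
  proof (cases "card A = 1")
    case True
    then obtain a where a: "A = {a}" by (rule card_1_singletonE)
    show ?thesis unfolding a Tc_single Hh_def Hv_def by (simp add: invs_single sgnv_def)
  next
    case False
    hence c2: "2 \<le> card A" using A by (metis One_nat_def Suc_1 Suc_leI card_gt_0_iff le_neq_implies_less)
    have "(\<Sum>l\<in>Tc A. sgnv (int (invs e (leaves l))) (Hv l)) = (\<Sum>l\<in>Tc A. h (sgnv (int (invs e (leaves l))) (fst (tval br h x e l))))"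
    proof (rule sum.cong[OF refl])
      fix l assume "l \<in> Tc A"
      hence "\<not> is_leaf l" using Tc_notleaf c2 by blast
      thus "sgnv (int (invs e (leaves l))) (Hv l) = h (sgnv (int (invs e (leaves l))) (fst (tval br h x e l)))"
        unfolding Hv_def mh_sgnv[OF h] by simp
    qed
    also have "\<dots> = h (W h x e A)" unfolding W_def module_hom.sum[OF h] ..
    finally show ?thesis unfolding Hh_def using False by simp
  qed
  have "W h x e K = (\<Sum>p\<in>msp K. \<Sum>l\<in>Tc (fst p). \<Sum>r\<in>Tc (snd p).
        sgnv (int (invs e (leaves (Node l r)))) (fst (tval br h x e (Node l r))))"
    unfolding W_def by (rule sum_Tc[OF fK cK])
  also have "\<dots> = (\<Sum>p\<in>msp K. \<Sum>l\<in>Tc (fst p). \<Sum>r\<in>Tc (snd p).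
        sgnv (cc e (fst p) (snd p) + dl e (fst p)) (br (sgnv (int (invs e (leaves l))) (Hv l)) (sgnv (int (invs e (leaves r))) (Hv r))))"
  proof (intro sum.cong[OF refl])
    fix p l r assume p: "p \<in> msp K" and l: "l \<in> Tc (fst p)" and r: "r \<in> Tc (snd p)"
    have D: "fst p \<inter> snd p = {}" using osp_D[of "fst p" "snd p" K] msp_osp[OF p] fK by auto
    have sl: "set (leaves l) = fst p" "distinct (leaves l)" "set (leaves r) = snd p" "distinct (leaves r)"
      using l r unfolding Tc_def by auto
    have dis: "distinct (leaves l @ leaves r)" using sl D by auto
    have inv: "int (invs e (leaves (Node l r))) = int (invs e (leaves l)) + int (invs e (leaves r)) + cc e (fst p) (snd p)"
      using invs_append[OF dis, of e] sl unfolding cc_def by simp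
    have dg: "(if is_leaf l then snd (tval br h x e l) else snd (tval br h x e l) - 1) = dl e (fst p)"
      using tval_deg[OF sl(2), of br h x e] sl(1) by simp
    show "sgnv (int (invs e (leaves (Node l r)))) (fst (tval br h x e (Node l r))) =
        sgnv (cc e (fst p) (snd p) + dl e (fst p)) (br (sgnv (int (invs e (leaves l))) (Hv l)) (sgnv (int (invs e (leaves r))) (Hv r)))"
      unfolding inv tval_Node_fst dg br_sgnv1 br_sgnv2 Hv_def[symmetric]
      by (simp add: sgnv_add[symmetric] algebra_simps)
  qed
  also have "\<dots> = (\<Sum>p\<in>msp K. sgnv (cc e (fst p) (snd p) + dl e (fst p))
       (br (\<Sum>l\<in>Tc (fst p). sgnv (int (invs e (leaves l))) (Hv l)) (\<Sum>r\<in>Tc (snd p). sgnv (int (invs e (leaves r))) (Hv r))))"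
    unfolding br_sum_sum sgnv_sum ..
  also have "\<dots> = YY br e (Hh h x e) K"
    unfolding YY_def pb_def
  proof (rule sum.cong[OF refl])
    fix p assume p: "p \<in> msp K"
    note D = osp_D[of "fst p" "snd p" K, simplified, OF msp_osp[OF p] fK]
    show "sgnv (cc e (fst p) (snd p) + dl e (fst p))
       (br (\<Sum>l\<in>Tc (fst p). sgnv (int (invs e (leaves l))) (Hv l)) (\<Sum>r\<in>Tc (snd p). sgnv (int (invs e (leaves r))) (Hv r))) =
      sgnv (cc e (fst p) (snd p) + dl e (fst p)) (br (Hh h x e (fst p)) (Hh h x e (snd p)))"
      using sub[OF D(8) D(5)] sub[OF D(9) D(6)] by simp
  qed
  finally show ?thesis .
qed

end

context MG begin

lemma DS_Hh:
  assumes fN: "finite N" and hm: "module_hom s s h"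
    and hdeg: "\<And>a x. x \<in> Gd a \<Longrightarrow> h x \<in> Gd (a - 1)"
    and hGm: "\<And>k x. x \<in> Gm k \<Longrightarrow> h x \<in> Gm k"
    and dhd: "\<And>x. d (h (d x)) = d x"
    and z: "\<And>j. j \<in> N \<Longrightarrow> z j \<in> Gd (e j) \<and> z j \<in> Gm (kk j) \<and> d (z j) = 0"
    and AC: "\<And>J w. J \<subseteq> N \<Longrightarrow> 1 < card J \<Longrightarrow> card J < card N \<Longrightarrow> w \<in> Gm (ks kk J) \<Longrightarrow> d w = 0 \<Longrightarrow> w \<in> d ` Gm (ks kk J)"
  shows "DS N e kk z (Hh h (\<lambda>j. proj_pi d h (z j)) e)"
proof -
  define H where "H = Hh h (\<lambda>j. proj_pi d h (z j)) e"
  define Pr where "Pr A \<longleftrightarrow> (H A \<in> Gd (dl e A) \<and> H A \<in> Gm (ks kk A) \<and> d (H A) = YY br e H A \<and>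
      (\<forall>j. A = {j} \<longrightarrow> (\<exists>u. u \<in> Gd (e j - 1) \<and> u \<in> Gm (kk j) \<and> H A = z j - d u)))" for A
  have h0: "h 0 = 0" using module_hom.zero[OF hm] .
  have main: "\<forall>A. A \<subseteq> N \<and> A \<noteq> {} \<and> A \<noteq> N \<and> card A \<le> m \<longrightarrow> Pr A" for m
  proof (induction m)
    case 0
    show ?case using fN by (auto dest: finite_subset)
  next
    case (Suc m)
    show ?case
    proof (intro allI impI)
      fix A assume A: "A \<subseteq> N \<and> A \<noteq> {} \<and> A \<noteq> N \<and> card A \<le> Suc m"
      have fA: "finite A" using A fN finite_subset by blast
      show "Pr A"
      proof (cases "card A \<le> m")
        case True thus ?thesis using Suc.IH A by blast
      next
        case False
        hence cA: "card A = Suc m" using A by simp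
        have sub: "Pr B" if "B \<subseteq> A" "B \<noteq> A" "B \<noteq> {}" for B
        proof -
          have "card B < card A" using psubset_card_mono[OF fA, of B] that by auto
          moreover have "B \<subseteq> N" "B \<noteq> N" using that A by auto
          ultimately show ?thesis using Suc.IH that(3) cA by auto
        qed
        show ?thesis
        proof (cases "card A = 1")
          case True
          then obtain j where Aj: "A = {j}" by (rule card_1_singletonE)
          have zj: "z j \<in> Gd (e j)" "z j \<in> Gm (kk j)" "d (z j) = 0" using z[of j] A Aj by auto
          have HA: "H A = z j - d (h (z j))" unfolding H_def Hh_def Aj proj_pi_def using zj(3) h0 by simp
          have u: "h (z j) \<in> Gd (e j - 1)" "h (z j) \<in> Gm (kk j)" using hdeg zj hGm by auto
          have "d (h (z j)) \<in> Gd (e j)" using Gd_d[OF u(1)] by simp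
          hence "H A \<in> Gd (e j)" unfolding HA using Gd_diff[OF zj(1)] by simp
          hence g1: "H A \<in> Gd (dl e A)" using Aj by simp
          have "H A \<in> Gm (kk j)" unfolding HA using Gm_diff[OF zj(2) Gm_d[OF u(2)]] by simp
          hence g2: "H A \<in> Gm (ks kk A)" using Aj by simp
          have "d (H A) = 0" unfolding HA using zj(3) by (simp add: d_diff)
          hence g3: "d (H A) = YY br e H A" using Aj Y_single by simp
          show ?thesis unfolding Pr_def using g1 g2 g3 u HA Aj by auto
        next
          case False
          have c2: "2 \<le> card A" using False A fA by (metis One_nat_def Suc_1 Suc_leI card_gt_0_iff le_neq_implies_less)
          have WY: "W h (\<lambda>j. proj_pi d h (z j)) e A = YY br e H A" unfolding H_def by (rule W_Y[OF hm fA c2])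
          have "H A = h (W h (\<lambda>j. proj_pi d h (z j)) e A)" unfolding H_def Hh_def using False by simp
          hence HA: "H A = h (YY br e H A)" unfolding WY .
          have hA: "hom e H A" unfolding hom_def using sub unfolding Pr_def by auto
          have YGd: "YY br e H A \<in> Gd (dl e A + 1)" by (rule Y_Gd[OF fA hA])
          have YGm: "YY br e H A \<in> Gm (ks kk A)" by (rule Y_Gm[OF fA]) (use sub in \<open>auto simp: Pr_def\<close>)
          have dY: "d (YY br e H A) = 0" by (rule JL[OF fA hA]) (use sub in \<open>auto simp: Pr_def\<close>)
          have c3: "card A < card N" using psubset_card_mono[OF fN, of A] A by auto
          obtain w where w: "w \<in> Gm (ks kk A)" "YY br e H A = d w" using AC[of A "YY br e H A"] A c2 c3 YGm dY by auto
          have g3: "d (H A) = YY br e H A" unfolding HA w(2) dhd ..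
          have g1: "H A \<in> Gd (dl e A)" unfolding HA using hdeg[OF YGd] by simp
          have g2: "H A \<in> Gm (ks kk A)" unfolding HA using hGm[OF YGm] .
          show ?thesis unfolding Pr_def using g1 g2 g3 False by auto
        qed
      qed
    qed
  qed
  show ?thesis unfolding DS_def H_def[symmetric]
    using main Pr_def by blast
qed

end
theorem mainTheorem1:
  fixes s :: "complex \<Rightarrow> 'v::ab_group_add \<Rightarrow> 'v"
    and Gd :: "int \<Rightarrow> 'v set" and Gm :: "'k::ab_group_add \<Rightarrow> 'v set"
    and br :: "'v \<Rightarrow> 'v \<Rightarrow> 'v" and d :: "'v \<Rightarrow> 'v"
    and n :: nat and kk :: "nat \<Rightarrow> 'k"
    and h h' :: "'v \<Rightarrow> 'v"
    and z :: "nat \<Rightarrow> 'v" and e :: "nat \<Rightarrow> int"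
  assumes "dgla s Gd br d"
    and "momentum_grading s Gd br d Gm"
    and "n \<ge> 2"
    and "\<forall>J. J \<subseteq> {1..n} \<and> 1 < card J \<and> card J < n \<longrightarrow>
           (\<forall>w \<in> Gm (\<Sum>i\<in>J. kk i). d w = 0 \<longrightarrow> w \<in> d ` Gm (\<Sum>i\<in>J. kk i))"
    and "mc_homotopy s Gd Gm d h" and "\<forall>x. d (h (d x)) = d x"
    and "mc_homotopy s Gd Gm d h'" and "\<forall>x. d (h' (d x)) = d x"
    and "\<forall>j\<in>{1..n}. z j \<in> Gd (e j) \<and> z j \<in> Gm (kk j) \<and> d (z j) = 0"
  shows "mm_bracket_rep br d h n z e - mm_bracket_rep br d h' n z e \<in> range d"
proof -
  have MGi: "MG s Gd br d Gm" by (rule MG.intro[OF DG.intro[OF assms(1)] MG_axioms.intro[OF assms(2)]])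
  interpret MG s Gd br d Gm by (rule MGi)
  define N where "N = {1..n}"
  have fN: "finite N" unfolding N_def by simp
  have cN: "card N = n" unfolding N_def by simp
  have c2: "2 \<le> card N" using assms(3) cN by simp
  have AC: "\<And>J w. J \<subseteq> N \<Longrightarrow> 1 < card J \<Longrightarrow> card J < card N \<Longrightarrow> w \<in> Gm (ks kk J) \<Longrightarrow> d w = 0 \<Longrightarrow> w \<in> d ` Gm (ks kk J)"
    using assms(4) unfolding ks_def N_def[symmetric] cN by blast
  have zz: "\<And>j. j \<in> N \<Longrightarrow> z j \<in> Gd (e j) \<and> z j \<in> Gm (kk j) \<and> d (z j) = 0"
    using assms(9) unfolding N_def by blast
  have trN: "trees n = Tc N" unfolding trees_def planar_trees_def Tc_def N_def by auto
  define tl where "tl = tail_exp n e"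
  have key: "DS N e kk z (Hh g (\<lambda>j. proj_pi d g (z j)) e) \<and>
     mm_bracket_rep br d g n z e = sgnv tl (YY br e (Hh g (\<lambda>j. proj_pi d g (z j)) e) N)
        - d (g (sgnv tl (YY br e (Hh g (\<lambda>j. proj_pi d g (z j)) e) N)))"
    if g: "mc_homotopy s Gd Gm d g" "\<forall>x. d (g (d x)) = d x" for g
  proof -
    have gm: "module_hom s s g" using g(1) unfolding mc_homotopy_def linear_iff_module_hom by blast
    have gdeg: "\<And>a x. x \<in> Gd a \<Longrightarrow> g x \<in> Gd (a - 1)" using g(1) unfolding mc_homotopy_def by blast
    have gGm: "\<And>k x. x \<in> Gm k \<Longrightarrow> g x \<in> Gm k" using g(1) unfolding mc_homotopy_def by blast
    have gdg: "\<And>x. d (g (d x)) = d x" using g(2) by blast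
    define x where "x = (\<lambda>j. proj_pi d g (z j))"
    define H where "H = Hh g x e"
    have DSH: "DS N e kk z H" unfolding H_def x_def by (rule DS_Hh[OF fN gm gdeg gGm gdg zz AC])
    have sm: "(\<Sum>t\<in>trees n. m_tree br d g n z e t) = sgnv tl (W g x e N)"
      unfolding trN W_def sgnv_sum
    proof (rule sum.cong[OF refl])
      fix t
      show "m_tree br d g n z e t = sgnv tl (sgnv (int (invs e (leaves t))) (fst (tval br g x e t)))"
        unfolding m_tree_def koszul_exp_def invs_def Let_def tl_def x_def
        by (simp add: sgnv_add add.commute)
    qed
    have WY: "W g x e N = YY br e H N" unfolding H_def by (rule W_Y[OF gm fN c2])
    have dY: "d (YY br e H N) = 0"
    proof (rule JL[OF fN DS_hom[OF DSH subset_refl]])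
      fix A assume "A \<subseteq> N" "A \<noteq> {}" "A \<noteq> N"
      thus "d (H A) = YY br e H A" using DSH unfolding DS_def by blast
    qed
    have "mm_bracket_rep br d g n z e = proj_pi d g (sgnv tl (YY br e H N))"
      unfolding mm_bracket_rep_def sm WY ..
    also have "\<dots> = sgnv tl (YY br e H N) - d (g (sgnv tl (YY br e H N)))"
      unfolding proj_pi_def d_sgnv dY using module_hom.zero[OF gm] by simp
    finally show ?thesis using DSH unfolding H_def x_def by simp
  qed
  define Y1 where "Y1 = YY br e (Hh h (\<lambda>j. proj_pi d h (z j)) e) N"
  define Y2 where "Y2 = YY br e (Hh h' (\<lambda>j. proj_pi d h' (z j)) e) N"
  note k1 = key[OF assms(5,6), folded Y1_def]
  note k2 = key[OF assms(7,8), folded Y2_def]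
  have hm: "module_hom s s h" using assms(5) unfolding mc_homotopy_def linear_iff_module_hom by blast
  have AC2: "\<exists>v. v \<in> Gd (dl e J - 1) \<and> v \<in> Gm (ks kk J) \<and> d v = c"
    if JJ: "J \<subseteq> N" "1 < card J" "card J < card N" "c \<in> Gd (dl e J)" "c \<in> Gm (ks kk J)" "d c = 0" for J c
  proof -
    obtain w where w: "w \<in> Gm (ks kk J)" "c = d w" using AC[OF JJ(1-3,5,6)] by blast
    have "h c \<in> Gd (dl e J - 1)" using assms(5) JJ(4) unfolding mc_homotopy_def by blast
    moreover have "h c \<in> Gm (ks kk J)" using assms(5) JJ(5) unfolding mc_homotopy_def by blast
    moreover have "d (h c) = c" using assms(6) w(2) by simp
    ultimately show ?thesis by blast
  qed
  have "Y1 - Y2 \<in> range d" unfolding Y1_def Y2_def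
    by (rule IT[OF fN conjunct1[OF k1] conjunct1[OF k2] AC2])
  then obtain u where u: "Y1 - Y2 = d u" by blast
  have "mm_bracket_rep br d h n z e - mm_bracket_rep br d h' n z e
      = sgnv tl (Y1 - Y2) - d (h (sgnv tl Y1)) + d (h' (sgnv tl Y2))"
    using conjunct2[OF k1] conjunct2[OF k2] by (simp add: sgnv_diff algebra_simps)
  also have "\<dots> = d (sgnv tl u - h (sgnv tl Y1) + h' (sgnv tl Y2))"
    unfolding u d_sgnv[symmetric] by (simp add: d_add d_diff)
  finally show ?thesis by blast
qed


end
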